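(* Fix $\beta>2$ and let $F_\beta(\mathbf{x},r)$, $r_1^\beta<r_2^\beta$, $y_1^\beta(r)$, $u_\beta(r)$, $\boldsymbol{\sigma}_1^\beta(r)$, $\boldsymbol{\sigma}_2^\beta(r)$, $\mathbf{p}^\beta(r)$ be as in the context. For $r\in(0,r_1^\beta)\cup(r_1^\beta,r_2^\beta)$ define $$\mathbf{l}_\beta(r)=\begin{cases}\{\mathbf{x}: x_1+x_2=H_\beta(y_1^\beta(r))+K_\beta(y_1^\beta(r))\}\cap\Xi & r\in(0,r_1^\beta),\\ \{\mathbf{x}: x_1+x_2=2u_\beta(r)\}\cap\Xi & r\in(r_1^\beta,r_2^\beta).\end{cases}$$ Then the restriction of $F_\beta(\cdot,r)$ to $\mathbf{l}_\beta(r)$ attains its minimum only at $\boldsymbol{\sigma}_1^\beta(r)$ and $\boldsymbol{\sigma}_2^\beta(r)$ if $r\in(0,r_1^\beta)$, and only at $\mathbf{p}^\beta(r)$ if $r\in(r_1^\beta,r_2^\beta)$.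
   Context: $\Xi=\{(x_1,x_2): x_1,x_2\ge0,\ x_1+x_2\le1\}$, $x_0=1-x_1-x_2$, $\mathbf{v}_k=(\cos(2\pi k/3),\sin(2\pi k/3))$, $F_\beta(\mathbf{x},r)=-\frac12|\sum_{k=0}^2x_k\mathbf{v}_k|^2+\frac1\beta\sum_{k=0}^2x_k\log(3x_k)+r\,x_0-\frac r2(x_1+x_2)$ (external field of magnitude $r$, angle $\pi$), with $0\log0=0$. Let $h(t)=-3t(1-2t)\log\frac{1-2t}{t}-3t+1$, $f_r(t)=\frac{2}{3(1-r-3t)}\log\frac{1-2t}{t}$, $k_r=(1-r)/3$; for $0<r<1$, $m_0(r)$ is the unique solution in $(0,k_r)$ of $h(t)=r$; $r_2^\beta$ is the unique $r\in(0,1)$ with $f_r(m_0(r))=\beta$; $r_1^\beta=1-\frac2\beta-\frac{2}{3\beta}\log(\frac{3\beta}2-2)$. For $r\in(0,r_2^\beta)$, $u_\beta(r)$ is the unique solution of $f_r(t)=\beta$ in $(m_0(r),k_r)$ and $\mathbf{p}^\beta(r)=(u_\beta(r),u_\beta(r))$. Let $G_\beta(x)=\frac1\beta\log x-\frac32x$, $l_\beta=2/(3\beta)$, $g_\beta=G_\beta(l_\beta)$; for $y<g_\beta$, $H_\beta(y)<l_\beta<K_\beta(y)$ solve $G_\beta(x)=y$, and $H_\beta(g_\beta)=K_\beta(g_\beta)=l_\beta$. For $r\le r_1^\beta$, $y_1^\beta(r)$ is the unique $y\le g_\beta$ with $K_\beta(y-3r/2)+H_\beta(y)+K_\beta(y)=1$;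 $\boldsymbol{\sigma}_1^\beta(r)=(K_\beta(y_1^\beta(r)),H_\beta(y_1^\beta(r)))$ and $\boldsymbol{\sigma}_2^\beta(r)=(H_\beta(y_1^\beta(r)),K_\beta(y_1^\beta(r)))$. *)

theory Defs
  imports Complex_Main
begin

text \<open>Points of the simplex are pairs (x1, x2); x0 = 1 - x1 - x2.\<close>

definition Xi :: "(real \<times> real) set" where
  "Xi = {(x1, x2). x1 \<ge> 0 \<and> x2 \<ge> 0 \<and> x1 + x2 \<le> 1}"

definition xlog3x :: "real \<Rightarrow> real" where
  "xlog3x t = (if t = 0 then 0 else t * ln (3 * t))"

definition vk :: "nat \<Rightarrow> real \<times> real" where
  "vk k = (cos (2 * pi * real k / 3), sin (2 * pi * real k / 3))"

definition Fbeta :: "real \<Rightarrow> real \<times> real \<Rightarrow> real \<Rightarrow> real" where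
  "Fbeta \<beta> x r =
     (let x1 = fst x; x2 = snd x; x0 = 1 - x1 - x2;
          xs = (\<lambda>k::nat. if k = 0 then x0 else if k = 1 then x1 else x2);
          a = (\<Sum>k<3. xs k * fst (vk k));
          b = (\<Sum>k<3. xs k * snd (vk k))
      in - (1/2) * (a\<^sup>2 + b\<^sup>2) + (1/\<beta>) * (\<Sum>k<3. xlog3x (xs k))
         + r * x0 - (r/2) * (x1 + x2))"

definition hfun :: "real \<Rightarrow> real" where
  "hfun t = - 3 * t * (1 - 2*t) * ln ((1 - 2*t) / t) - 3 * t + 1"

definition ffun :: "real \<Rightarrow> real \<Rightarrow> real" where
  "ffun r t = 2 / (3 * (1 - r - 3*t)) * ln ((1 - 2*t) / t)"

definition kfun :: "real \<Rightarrow> real" where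
  "kfun r = (1 - r) / 3"

definition m0 :: "real \<Rightarrow> real" where
  "m0 r = (THE t. 0 < t \<and> t < kfun r \<and> hfun t = r)"

definition r2 :: "real \<Rightarrow> real" where
  "r2 \<beta> = (THE r. 0 < r \<and> r < 1 \<and> ffun r (m0 r) = \<beta>)"

definition r1 :: "real \<Rightarrow> real" where
  "r1 \<beta> = 1 - 2/\<beta> - 2/(3*\<beta>) * ln (3*\<beta>/2 - 2)"

definition ubeta :: "real \<Rightarrow> real \<Rightarrow> real" where
  "ubeta \<beta> r = (THE t. m0 r < t \<and> t < kfun r \<and> ffun r t = \<beta>)"

definition pbeta :: "real \<Rightarrow> real \<Rightarrow> real \<times> real" where
  "pbeta \<beta> r = (ubeta \<beta> r, ubeta \<beta> r)"

definition Gfun :: "real \<Rightarrow> real \<Rightarrow> real" where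
  "Gfun \<beta> x = (1/\<beta>) * ln x - 3/2 * x"

definition lbeta :: "real \<Rightarrow> real" where
  "lbeta \<beta> = 2 / (3*\<beta>)"

definition gbeta :: "real \<Rightarrow> real" where
  "gbeta \<beta> = Gfun \<beta> (lbeta \<beta>)"

text \<open>For y \<le> g: H is the solution of G x = y in (0, l], K the solution in [l, \<infinity>).
  For y < g these are the two solutions H < l < K; for y = g both equal l.\<close>
definition Hfun :: "real \<Rightarrow> real \<Rightarrow> real" where
  "Hfun \<beta> y = (THE x. 0 < x \<and> x \<le> lbeta \<beta> \<and> Gfun \<beta> x = y)"

definition Kfun :: "real \<Rightarrow> real \<Rightarrow> real" where
  "Kfun \<beta> y = (THE x. lbeta \<beta> \<le> x \<and> Gfun \<beta> x = y)"

definition y1 :: "real \<Rightarrow> real \<Rightarrow> real" where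
  "y1 \<beta> r = (THE y. y \<le> gbeta \<beta> \<and>
      Kfun \<beta> (y - 3*r/2) + Hfun \<beta> y + Kfun \<beta> y = 1)"

definition sigma1 :: "real \<Rightarrow> real \<Rightarrow> real \<times> real" where
  "sigma1 \<beta> r = (Kfun \<beta> (y1 \<beta> r), Hfun \<beta> (y1 \<beta> r))"

definition sigma2 :: "real \<Rightarrow> real \<Rightarrow> real \<times> real" where
  "sigma2 \<beta> r = (Hfun \<beta> (y1 \<beta> r), Kfun \<beta> (y1 \<beta> r))"

definition lline :: "real \<Rightarrow> real \<Rightarrow> (real \<times> real) set" where
  "lline \<beta> r =
     (if 0 < r \<and> r < r1 \<beta>
      then {x. fst x + snd x = Hfun \<beta> (y1 \<beta> r) + Kfun \<beta> (y1 \<beta> r)} \<inter> Xi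
      else {x. fst x + snd x = 2 * ubeta \<beta> r} \<inter> Xi)"

end

theory Submission
  imports Defs
begin


lemma cos120: "cos (2 * pi / 3) = - 1/2"
proof -
  have "2*pi/3 = pi - pi/3" by simp
  then have "cos (2 * pi / 3) = cos (pi - pi/3)" by metis
  also have "\<dots> = - cos (pi/3)" by (rule cos_pi_minus)
  finally show ?thesis by (simp only: cos_60)
qed
lemma sin120: "sin (2 * pi / 3) = sqrt 3/2"
proof -
  have "2*pi/3 = pi - pi/3" by simp
  then have "sin (2 * pi / 3) = sin (pi - pi/3)" by metis
  also have "\<dots> = sin (pi/3)" by (rule sin_pi_minus)
  finally show ?thesis by (simp only: sin_60)
qed
lemma cos240: "cos (2 * pi * 2 / 3) = - 1/2"
proof -
  have "2*pi*2/3 = pi/3 + pi" by simp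
  then have "cos (2 * pi * 2 / 3) = cos (pi/3 + pi)" by metis
  also have "\<dots> = - cos (pi/3)" by (rule cos_periodic_pi)
  finally show ?thesis by (simp only: cos_60)
qed
lemma sin240: "sin (2 * pi * 2 / 3) = - sqrt 3/2"
proof -
  have "2*pi*2/3 = pi/3 + pi" by simp
  then have "sin (2 * pi * 2 / 3) = sin (pi/3 + pi)" by metis
  also have "\<dots> = - sin (pi/3)" by (rule sin_periodic_pi)
  finally show ?thesis by (simp only: sin_60)
qed

lemma vk1: "vk (Suc 0) = (- 1/2, sqrt 3/2)"
proof -
  have "vk (Suc 0) = (cos (2 * pi / 3), sin (2 * pi / 3))" unfolding vk_def by simp
  then show ?thesis using cos120 sin120 by simp
qed
lemma vk2: "vk (Suc (Suc 0)) = (- 1/2, - sqrt 3/2)"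
proof -
  have "real (Suc (Suc 0)) = 2" by simp
  then have "vk (Suc (Suc 0)) = (cos (2 * pi * 2 / 3), sin (2 * pi * 2/ 3))" unfolding vk_def by metis
  then show ?thesis using cos240 sin240 by simp
qed
lemma vk0: "vk 0 = (1, 0)" unfolding vk_def by simp

lemma Fbeta_closed:
  "Fbeta \<beta> (x1, x2) r =
     - (1/2) * ((1 - x1 - x2) - (x1 + x2)/2)^2 - 3/8 * (x1 - x2)^2
     + (1/\<beta>) * (xlog3x (1 - x1 - x2) + xlog3x x1 + xlog3x x2)
     + r * (1 - x1 - x2) - (r/2) * (x1 + x2)"
proof -
  have s3: "sqrt 3 ^ 2 = (3::real)" by simp
  have eA: "(\<Sum>k::nat<3. (if k = 0 then 1 - x1 - x2 else if k = 1 then x1 else x2) * fst (vk k))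
        = (1 - x1 - x2) - (x1 + x2)/2"
    by (simp add: numeral_3_eq_3 lessThan_Suc vk0 vk1 vk2 algebra_simps)
  have eB: "(\<Sum>k::nat<3. (if k = 0 then 1 - x1 - x2 else if k = 1 then x1 else x2) * snd (vk k))
        = sqrt 3 / 2 * (x1 - x2)"
    by (simp add: numeral_3_eq_3 lessThan_Suc vk0 vk1 vk2 algebra_simps)
  have eS: "(\<Sum>k::nat<3. xlog3x (if k = 0 then 1 - x1 - x2 else if k = 1 then x1 else x2))
     = xlog3x (1 - x1 - x2) + xlog3x x1 + xlog3x x2"
    by (simp add: numeral_3_eq_3 lessThan_Suc)
  have "Fbeta \<beta> (x1, x2) r = - (1/2) * (((1 - x1 - x2) - (x1 + x2)/2)\<^sup>2 + (sqrt 3 / 2 * (x1 - x2))\<^sup>2)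
     + (1/\<beta>) * (xlog3x (1 - x1 - x2) + xlog3x x1 + xlog3x x2)
         + r * (1 - x1 - x2) - (r/2) * (x1 + x2)"
    unfolding Fbeta_def Let_def fst_conv snd_conv by (simp only: eA eB eS)
  moreover have "(sqrt 3 / 2 * (x1 - x2))\<^sup>2 = 3/4*(x1-x2)\<^sup>2"
    by (simp add: power_mult_distrib power_divide)
  ultimately show ?thesis
    by (simp add: algebra_simps)
qed



definition Lf :: "real \<Rightarrow> real" where "Lf t = ln ((1 - 2*t) / t)"

lemma Lf_pos: "0 < t \<Longrightarrow> t < 1/3 \<Longrightarrow> Lf t > 0"
  unfolding Lf_def by (subst ln_gt_zero_iff) (auto simp: field_simps)

lemma Lf_deriv: "0 < t \<Longrightarrow> t < 1/2 \<Longrightarrow> (Lf has_real_derivative (- 1 / (t * (1 - 2*t)))) (at t)"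
  unfolding Lf_def
  by (rule derivative_eq_intros refl | simp)+

lemma hfun_Lf: "hfun t = - 3 * t * (1 - 2*t) * Lf t - 3 * t + 1"
  unfolding hfun_def Lf_def by simp

lemma hfun_deriv: "0 < t \<Longrightarrow> t < 1/2 \<Longrightarrow> (hfun has_real_derivative (- 3 * (1 - 4*t) * Lf t)) (at t)"
proof -
  assume t: "0 < t" "t < 1/2"
  have "((\<lambda>t. - 3 * t * (1 - 2*t) * Lf t - 3 * t + 1) has_real_derivative
     (- 3 * (1 - 2*t) * Lf t + (- 3 * t) * (- 2) * Lf t + (- 3 * t * (1 - 2*t)) * (- 1 / (t * (1 - 2*t))) - 3)) (at t)"
    by (rule derivative_eq_intros Lf_deriv[OF t] refl | simp add: algebra_simps)+
  moreover have "(- 3 * (1 - 2*t) * Lf t + (- 3 * t) * (- 2) * Lf t + (- 3 * t * (1 - 2*t)) * (- 1 / (t * (1 - 2*t))) - 3)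
      = - 3 * (1 - 4*t) * Lf t"
  proof -
    have "(- 3 * t * (1 - 2*t)) * (- 1 / (t * (1 - 2*t))) = 3" using t by (simp add: field_simps)
    then show ?thesis by (simp add: algebra_simps)
  qed
  ultimately show ?thesis by (simp add: hfun_Lf[abs_def])
qed

lemma deriv_strict_dec:
  fixes f f' :: "real \<Rightarrow> real"
  assumes "a < b" "\<And>x. a \<le> x \<Longrightarrow> x \<le> b \<Longrightarrow> (f has_real_derivative f' x) (at x)"
    "\<And>x. a < x \<Longrightarrow> x < b \<Longrightarrow> f' x < 0"
  shows "f b < f a"
proof (rule DERIV_neg_imp_decreasing_open[OF assms(1)])
  show "\<And>x. a < x \<Longrightarrow> x < b \<Longrightarrow> \<exists>y. (f has_real_derivative y) (at x) \<and> y < 0"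
    using assms(2,3) by (metis less_imp_le)
  show "continuous_on {a..b} f"
    by (rule continuous_at_imp_continuous_on) (metis assms(2) DERIV_isCont atLeastAtMost_iff)
qed

lemma deriv_strict_inc:
  fixes f f' :: "real \<Rightarrow> real"
  assumes "a < b" "\<And>x. a \<le> x \<Longrightarrow> x \<le> b \<Longrightarrow> (f has_real_derivative f' x) (at x)"
    "\<And>x. a < x \<Longrightarrow> x < b \<Longrightarrow> f' x > 0"
  shows "f a < f b"
proof (rule DERIV_pos_imp_increasing_open[OF assms(1)])
  show "\<And>x. a < x \<Longrightarrow> x < b \<Longrightarrow> \<exists>y. (f has_real_derivative y) (at x) \<and> y > 0"
    using assms(2,3) by (metis less_imp_le)
  show "continuous_on {a..b} f"
    by (rule continuous_at_imp_continuous_on) (metis assms(2) DERIV_isCont atLeastAtMost_iff)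
qed

lemma hfun_dec: "0 < a \<Longrightarrow> a < b \<Longrightarrow> b \<le> 1/4 \<Longrightarrow> hfun b < hfun a"
proof (rule deriv_strict_dec[where f = hfun and f' = "\<lambda>t. - 3 * (1 - 4*t) * Lf t"])
  fix x assume "0 < a" "a < b" "b \<le> 1/4" "a \<le> x" "x \<le> b"
  then show "(hfun has_real_derivative - 3 * (1 - 4*x) * Lf x) (at x)" by (intro hfun_deriv) auto
next
  fix x assume "0 < a" "b \<le> 1/4" "a < x" "x < b"
  then have "Lf x > 0" "1 - 4*x > 0" by (auto intro!: Lf_pos)
  moreover have "- 3 * (1 - 4*x) < 0" using \<open>1 - 4*x > 0\<close> by simp
  ultimately show "- 3 * (1 - 4*x) * Lf x < 0" using mult_neg_pos by blast
qed

lemma hfun_third: "hfun (1/3) = 0"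
  unfolding hfun_def by simp

lemma hfun_neg: "1/4 \<le> t \<Longrightarrow> t < 1/3 \<Longrightarrow> hfun t < 0"
proof -
  assume t: "1/4 \<le> t" "t < 1/3"
  have "hfun t < hfun (1/3)"
  proof (rule deriv_strict_inc[where f = hfun and f' = "\<lambda>t. - 3 * (1 - 4*t) * Lf t"])
    fix x assume "t \<le> x" "x \<le> 1/3"
    then show "(hfun has_real_derivative - 3 * (1 - 4*x) * Lf x) (at x)" using t by (intro hfun_deriv) auto
  next
    fix x assume "t < x" "x < 1/3"
    then have "Lf x > 0" "1 - 4*x < 0" using t by (auto intro!: Lf_pos)
    moreover have "- 3 * (1 - 4*x) > 0" using \<open>1 - 4*x < 0\<close> by simp
    ultimately show "- 3 * (1 - 4*x) * Lf x > 0" using mult_pos_pos by blast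
  qed (use t in auto)
  then show ?thesis by (simp add: hfun_third)
qed

lemma hfun_lt: "0 < t \<Longrightarrow> t < 1/3 \<Longrightarrow> hfun t < 1 - 3*t"
  using Lf_pos[of t] unfolding hfun_Lf by (simp add: mult_pos_pos)

lemma hfun_small:
  assumes r: "0 < r" "r < 1"
  shows "hfun (((1-r)/20)^2) > r"
proof -
  define e where "e = (1-r)/20"
  have e: "0 < e" "e < 1/20" using r by (auto simp: e_def)
  have e2: "e^2 \<le> e/20" using e mult_left_mono[of e "1/20" e] by (simp add: power2_eq_square)
  have L1: "Lf (e^2) \<le> ln (1/e^2)"
    unfolding Lf_def using e e2 by (subst ln_le_cancel_iff) (auto simp: field_simps)
  have "ln (1/e^2) = 2 * ln (1/e)" using e by (simp add: ln_div ln_mult power2_eq_square)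
  also have "\<dots> \<le> 2 * (1/e)"
  proof -
    have "ln (1/e) < 1/e" using e by (intro ln_less_self) simp
    then show ?thesis by linarith
  qed
  finally have L: "Lf (e^2) \<le> 2/e" using L1 by simp
  have Lp: "Lf (e^2) > 0" using e e2 by (intro Lf_pos) auto
  have "3 * e^2 * (1 - 2*e^2) * Lf (e^2) \<le> 3 * e^2 * Lf (e^2)"
    using e e2 Lp by (intro mult_right_mono) auto
  also have "\<dots> \<le> 3 * e^2 * (2/e)" using L e by (intro mult_left_mono) auto
  also have "\<dots> = 6 * e" using e by (simp add: power2_eq_square)
  finally have "hfun (e^2) \<ge> 1 - 3*e^2 - 6*e" unfolding hfun_Lf by simp
  moreover have "3*e^2 \<le> e" using e e2 by simp
  ultimately have "hfun (e^2) \<ge> 1 - 7*e" by simp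
  moreover have "1 - 7*e > r" using r by (simp add: e_def field_simps)
  ultimately show ?thesis by (simp add: e_def)
qed



lemma kfun_bounds: "0 < r \<Longrightarrow> r < 1 \<Longrightarrow> 0 < kfun r \<and> kfun r < 1/3"
  unfolding kfun_def by auto

lemma hfun_cont: "0 < a \<Longrightarrow> b < 1/2 \<Longrightarrow> continuous_on {a..b} hfun"
  by (rule continuous_at_imp_continuous_on) (auto intro!: DERIV_isCont hfun_deriv)

lemma hfun_pos_lt: "0 < t \<Longrightarrow> t < 1/3 \<Longrightarrow> hfun t > 0 \<Longrightarrow> t < 1/4"
  using hfun_neg[of t] by fastforce

lemma hfun_inj: "0 < t \<Longrightarrow> t \<le> 1/4 \<Longrightarrow> 0 < t' \<Longrightarrow> t' \<le> 1/4 \<Longrightarrow> hfun t = hfun t' \<Longrightarrow> t = t'"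
  using hfun_dec[of t t'] hfun_dec[of t' t] by (cases t t' rule: linorder_cases) auto

lemma m0_ex: assumes r: "0 < r" "r < 1"
  shows "\<exists>t. 0 < t \<and> t < kfun r \<and> hfun t = r"
proof -
  define t0 where "t0 = ((1-r)/20)^2"
  define k where "k = kfun r"
  have k: "0 < k" "k < 1/3" using kfun_bounds[OF r] by (auto simp: k_def)
  have t0a: "t0 = (1-r)*(1-r)/400" by (simp add: t0_def power2_eq_square)
  have p: "(1-r)*(1-r) < 1 * (1-r)" using r by (intro mult_strict_right_mono) auto
  have p2: "(1-r)*(1-r) > 0" using r by simp
  have t0: "0 < t0" "t0 < k" unfolding t0a k_def kfun_def using p p2 r by linarith+
  have h0: "hfun t0 > r" using hfun_small[OF r] by (simp add: t0_def)
  have "1 - 3*k = r" by (simp add: k_def kfun_def field_simps)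
  then have hk: "hfun k < r" using hfun_lt[OF k] by simp
  obtain t where t: "t0 \<le> t" "t \<le> k" "hfun t = r"
    using IVT2'[of hfun k r t0] hk h0 t0 k hfun_cont[of t0 k] by auto
  then have "t \<noteq> k" using hk by auto
  then show ?thesis using t t0 by (intro exI[of _ t]) (auto simp: k_def)
qed

lemma m0_uniq: assumes r: "0 < r" "r < 1" and t: "0 < t" "t < kfun r" "hfun t = r"
  and t': "0 < t'" "t' < kfun r" "hfun t' = r"
  shows "t = t'"
proof -
  have k: "kfun r < 1/3" using kfun_bounds[OF r] by auto
  have "t < 1/4" "t' < 1/4" using hfun_pos_lt t t' r k by auto
  then show ?thesis using hfun_inj[of t t'] t t' by auto
qed

lemma m0_props: assumes r: "0 < r" "r < 1"
  shows "0 < m0 r \<and> m0 r < kfun r \<and> hfun (m0 r) = r \<and> m0 r < 1/4"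
proof -
  obtain t where t: "0 < t" "t < kfun r" "hfun t = r" using m0_ex[OF r] by blast
  have "m0 r = t" unfolding m0_def
    by (rule the_equality) (use t m0_uniq[OF r] in auto)
  moreover have "t < 1/4" using hfun_pos_lt t r kfun_bounds[OF r] by auto
  ultimately show ?thesis using t by auto
qed

lemma m0_eq: "0 < r \<Longrightarrow> r < 1 \<Longrightarrow> 0 < t \<Longrightarrow> t < kfun r \<Longrightarrow> hfun t = r \<Longrightarrow> m0 r = t"
  using m0_props m0_uniq by blast

lemma ffun_Lf: "ffun r t = 2 / (3 * (1 - r - 3*t)) * Lf t"
  unfolding ffun_def Lf_def by simp

lemma ffun_deriv:
  assumes t: "0 < t" "t < 1/2" "1 - r - 3*t > 0"
  shows "(ffun r has_real_derivative (2/3) * (r - hfun t) / (t * (1 - 2*t) * (1 - r - 3*t)^2)) (at t)"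
proof -
  define D where "D = 1 - r - 3*t"
  define P where "P = t * (1 - 2*t)"
  have nz: "D \<noteq> 0" "P \<noteq> 0" using t by (auto simp: D_def P_def)
  have d1: "((\<lambda>t. 1 - r - 3*t) has_real_derivative (- 3)) (at t)"
    by (auto intro!: derivative_eq_intros)
  have d2: "((\<lambda>t. Lf t / (1 - r - 3*t)) has_real_derivative
      ((- 1 / P) * D - Lf t * (- 3)) / (D * D)) (at t)"
    using DERIV_divide[OF Lf_deriv[OF t(1,2)] d1] nz unfolding D_def P_def by simp
  have d3: "((\<lambda>t. (2/3) * (Lf t / (1 - r - 3*t))) has_real_derivative
      (2/3) * (((- 1 / P) * D - Lf t * (- 3)) / (D * D))) (at t)"
    by (rule DERIV_cmult[OF d2])
  have e1: "(- 1 / P) * D - Lf t * (- 3) = (r - hfun t) / P"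
    using nz unfolding hfun_Lf D_def P_def by (simp add: field_simps)
  have e2: "(2/3) * (((- 1 / P) * D - Lf t * (- 3)) / (D * D)) = (2/3) * (r - hfun t) / (t * (1 - 2*t) * (1 - r - 3*t)^2)"
    unfolding e1 using nz by (simp add: D_def P_def power2_eq_square field_simps)
  have "ffun r = (\<lambda>t. (2/3) * (Lf t / (1 - r - 3*t)))"
    by (rule ext) (simp add: ffun_Lf)
  then show ?thesis using d3 e2 by simp
qed



lemma ffun_cont: assumes "0 < a" "b < kfun r" "r < 1" "0 < r" shows "continuous_on {a..b} (ffun r)"
proof (rule continuous_at_imp_continuous_on, intro ballI)
  fix x assume "x \<in> {a..b}"
  then have "(ffun r has_real_derivative (2/3) * (r - hfun x) / (x * (1 - 2*x) * (1 - r - 3*x)^2)) (at x)"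
    using assms by (intro ffun_deriv) (auto simp: kfun_def)
  then show "isCont (ffun r) x" by (rule DERIV_isCont)
qed

lemma h_gt_r: assumes r: "0 < r" "r < 1" and x: "0 < x" "x < m0 r" shows "hfun x > r"
  using m0_props[OF r] hfun_dec[of x "m0 r"] x by auto

lemma h_lt_r: assumes r: "0 < r" "r < 1" and x: "m0 r < x" "x < kfun r" shows "hfun x < r"
proof (cases "x \<le> 1/4")
  case True then show ?thesis using m0_props[OF r] hfun_dec[of "m0 r" x] x by auto
next
  case False then show ?thesis using hfun_neg[of x] x kfun_bounds[OF r] r by auto
qed

lemma ffun_deriv_den:
  assumes "0 < t" "t < kfun r" "r < 1" "0 < r"
  shows "t * (1 - 2*t) * (1 - r - 3*t)^2 > 0"
proof -
  have p: "1 - 2*t > 0" "1 - r - 3*t > 0" using assms by (auto simp: kfun_def)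
  then show ?thesis using p assms(1) by simp
qed

lemma ffun_dec: assumes r: "0 < r" "r < 1" and ab: "0 < a" "a < b" "b \<le> m0 r"
  shows "ffun r b < ffun r a"
proof (rule deriv_strict_dec[where f = "ffun r" and f' = "\<lambda>t. (2/3) * (r - hfun t) / (t * (1 - 2*t) * (1 - r - 3*t)^2)"])
  fix x assume x: "a \<le> x" "x \<le> b"
  then show "(ffun r has_real_derivative (2/3) * (r - hfun x) / (x * (1 - 2*x) * (1 - r - 3*x)^2)) (at x)"
    using m0_props[OF r] ab r by (intro ffun_deriv) (auto simp: kfun_def)
next
  fix x assume x: "a < x" "x < b"
  then have "r - hfun x < 0" using h_gt_r[OF r, of x] ab by auto
  moreover have "0 < x" "x < kfun r" using x ab m0_props[OF r] by auto
  ultimately show "(2/3) * (r - hfun x) / (x * (1 - 2*x) * (1 - r - 3*x)^2) < 0"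
    using ffun_deriv_den[of x r] r by (intro divide_neg_pos) auto
qed (use ab in auto)

lemma ffun_inc: assumes r: "0 < r" "r < 1" and ab: "m0 r \<le> a" "a < b" "b < kfun r"
  shows "ffun r a < ffun r b"
proof (rule deriv_strict_inc[where f = "ffun r" and f' = "\<lambda>t. (2/3) * (r - hfun t) / (t * (1 - 2*t) * (1 - r - 3*t)^2)"])
  fix x assume x: "a \<le> x" "x \<le> b"
  then show "(ffun r has_real_derivative (2/3) * (r - hfun x) / (x * (1 - 2*x) * (1 - r - 3*x)^2)) (at x)"
    using m0_props[OF r] ab r by (intro ffun_deriv) (auto simp: kfun_def)
next
  fix x assume x: "a < x" "x < b"
  then have "r - hfun x > 0" using h_lt_r[OF r, of x] ab by auto
  moreover have "0 < x" "x < kfun r" using x ab m0_props[OF r] by auto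
  ultimately show "(2/3) * (r - hfun x) / (x * (1 - 2*x) * (1 - r - 3*x)^2) > 0"
    using ffun_deriv_den[of x r] r by (intro divide_pos_pos) auto
qed (use ab in auto)

lemma ffun_at_root: assumes "0 < t" "t < 1/3" "hfun t = r"
  shows "ffun r t = 2 / (9 * t * (1 - 2*t))"
proof -
  have L: "Lf t > 0" using Lf_pos assms by auto
  have "1 - r - 3*t = 3 * t * (1 - 2*t) * Lf t" using assms(3) unfolding hfun_Lf by (simp add: algebra_simps)
  then have "ffun r t = 2 / (3 * (3 * t * (1 - 2*t) * Lf t)) * Lf t" unfolding ffun_Lf by simp
  also have "\<dots> = 2 / (9 * t * (1 - 2*t))" using L assms by (simp add: field_simps)
  finally show ?thesis .
qed

lemma ffun_m0: "0 < r \<Longrightarrow> r < 1 \<Longrightarrow> ffun r (m0 r) = 2 / (9 * m0 r * (1 - 2 * m0 r))"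
  using m0_props[of r] by (intro ffun_at_root) auto

definition tstar :: "real \<Rightarrow> real" where
  "tstar \<beta> = (9 - sqrt (81 - 144/\<beta>)) / 36"

lemma tstar_props: assumes b: "\<beta> > 2"
  shows "0 < tstar \<beta> \<and> tstar \<beta> < 1/6 \<and> 9 * tstar \<beta> * (1 - 2 * tstar \<beta>) = 2/\<beta>"
proof -
  define q where "q = sqrt (81 - 144/\<beta>)"
  have "144/\<beta> < 72" using b by (simp add: field_simps)
  then have a1: "81 - 144/\<beta> > 9" by simp
  have a2: "144/\<beta> > 0" using b by simp
  have q2: "q^2 = 81 - 144/\<beta>" using a1 by (simp add: q_def)
  have "q > 3" unfolding q_def using a1 real_less_rsqrt[of 3 "81 - 144/\<beta>"] by simp
  moreover have "q < 9" unfolding q_def using a2 real_sqrt_less_iff[of "81 - 144/\<beta>" 81] by simp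
  moreover have "9 * ((9 - q)/36) * (1 - 2 * ((9 - q)/36)) = 2/\<beta>"
  proof -
    have "9 * ((9 - q)/36) * (1 - 2 * ((9 - q)/36)) = (81 - q^2)/72"
      by (simp add: field_simps power2_eq_square)
    then show ?thesis using q2 by simp
  qed
  ultimately show ?thesis unfolding tstar_def q_def[symmetric] by auto
qed

lemma ln2_lt: "ln (2::real) < 3/4"
proof -
  have "1 + 3/4 + (3/4)^2/2 \<le> exp (3/4::real)" by (rule exp_lower_Taylor_quadratic) simp
  then have "2 < exp (3/4::real)" by (simp add: power2_eq_square)
  then show ?thesis by (metis exp_less_cancel_iff exp_ln zero_less_numeral)
qed

lemma hfun_sixth: "hfun (1/6) > 0"
proof -
  have "hfun (1/6) = 1/2 - (1/3) * ln 4" unfolding hfun_def by simp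
  moreover have "ln (4::real) = 2 * ln 2"
    using ln_mult[of 2 2] by simp
  ultimately show ?thesis using ln2_lt by simp
qed

lemma quad_inj: fixes m t :: real shows "0 < m \<Longrightarrow> m < 1/4 \<Longrightarrow> 0 < t \<Longrightarrow> t < 1/4 \<Longrightarrow>
   9 * m * (1 - 2*m) = 9 * t * (1 - 2*t) \<Longrightarrow> m = t"
proof -
  assume a: "0 < m" "m < 1/4" "0 < t" "t < 1/4" "9 * m * (1 - 2*m) = 9 * t * (1 - 2*t)"
  have "9 * m * (1 - 2*m) - 9 * t * (1 - 2*t) = 9 * (m - t) * (1 - 2*(m+t))" by (simp add: algebra_simps)
  then have "(m - t) * (1 - 2*(m+t)) = 0" using a by simp
  moreover have "1 - 2*(m+t) \<noteq> 0" using a by simp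
  ultimately show ?thesis by simp
qed

lemma quad_mono: fixes m t :: real shows "0 < t \<Longrightarrow> t < m \<Longrightarrow> m < 1/4 \<Longrightarrow> 9 * t * (1 - 2*t) < 9 * m * (1 - 2*m)"
proof -
  assume a: "0 < t" "t < m" "m < 1/4"
  have "9 * m * (1 - 2*m) - 9 * t * (1 - 2*t) = 9 * (m - t) * (1 - 2*(m+t))" by (simp add: algebra_simps)
  moreover have "9 * (m - t) * (1 - 2*(m+t)) > 0" using a by (intro mult_pos_pos) auto
  ultimately show ?thesis by simp
qed

lemma r2_props: assumes b: "\<beta> > 2"
  shows "r2 \<beta> = hfun (tstar \<beta>) \<and> 0 < r2 \<beta> \<and> r2 \<beta> < 1"
proof -
  define t where "t = tstar \<beta>"
  define R where "R = hfun t"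
  have t: "0 < t" "t < 1/6" "9 * t * (1 - 2*t) = 2/\<beta>" using tstar_props[OF b] by (auto simp: t_def)
  have R0: "0 < R" using hfun_dec[of t "1/6"] hfun_sixth t by (auto simp: R_def)
  have R1: "R < 1 - 3*t" using hfun_lt[of t] t by (simp add: R_def)
  then have R1': "R < 1" using t by simp
  have tk: "t < kfun R" using R1 by (simp add: kfun_def)
  have m0R: "m0 R = t" using m0_eq[OF R0 R1' t(1) tk] by (simp add: R_def)
  have fR: "ffun R (m0 R) = \<beta>" using ffun_m0[OF R0 R1'] m0R t b by simp
  have "r2 \<beta> = R" unfolding r2_def
  proof (rule the_equality)
    show "0 < R \<and> R < 1 \<and> ffun R (m0 R) = \<beta>" using R0 R1' fR by auto
  next
    fix r assume r: "0 < r \<and> r < 1 \<and> ffun r (m0 r) = \<beta>"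
    then have r': "0 < r" "r < 1" by auto
    have m: "0 < m0 r" "m0 r < 1/4" "hfun (m0 r) = r" using m0_props[OF r'] by auto
    have "2 / (9 * m0 r * (1 - 2 * m0 r)) = \<beta>" using r ffun_m0[OF r'] by simp
    then have "9 * m0 r * (1 - 2 * m0 r) = 2/\<beta>" using b m by (simp add: field_simps)
    then have "m0 r = t" using quad_inj[of "m0 r" t] m t by simp
    then show "r = R" using m by (simp add: R_def)
  qed
  then show ?thesis using R0 R1' by (simp add: R_def t_def)
qed



lemma Lf_mono: "0 < t \<Longrightarrow> t \<le> k \<Longrightarrow> k < 1/2 \<Longrightarrow> Lf k \<le> Lf t"
  unfolding Lf_def by (subst ln_le_cancel_iff) (auto simp: field_simps intro: mult_right_mono)

lemma m0_gt_tstar: assumes b: "\<beta> > 2" and r: "0 < r" "r < r2 \<beta>"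
  shows "tstar \<beta> < m0 r"
proof -
  have R: "r2 \<beta> = hfun (tstar \<beta>)" "r2 \<beta> < 1" using r2_props[OF b] by auto
  have r1: "r < 1" using r R by simp
  have t: "0 < tstar \<beta>" "tstar \<beta> < 1/6" using tstar_props[OF b] by auto
  have m: "0 < m0 r" "m0 r < 1/4" "hfun (m0 r) = r" using m0_props[OF r(1) r1] by auto
  show ?thesis
  proof (rule ccontr)
    assume "\<not> ?thesis"
    then have "m0 r \<le> tstar \<beta>" by simp
    then have "hfun (tstar \<beta>) \<le> hfun (m0 r)"
      using hfun_dec[of "m0 r" "tstar \<beta>"] m t by (cases "m0 r = tstar \<beta>") auto
    then show False using m R r by simp
  qed
qed

lemma u_ex: assumes b: "\<beta> > 2" and r: "0 < r" "r < r2 \<beta>"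
  shows "\<exists>u. m0 r < u \<and> u < kfun r \<and> ffun r u = \<beta>"
proof -
  have r1: "r < 1" using r r2_props[OF b] by simp
  define m where "m = m0 r"
  define k where "k = kfun r"
  have m: "0 < m" "m < 1/4" "m < k" "hfun m = r" using m0_props[OF r(1) r1] by (auto simp: m_def k_def)
  have k: "0 < k" "k < 1/3" using kfun_bounds[OF r(1) r1] by (auto simp: k_def)
  have t: "0 < tstar \<beta>" "9 * tstar \<beta> * (1 - 2 * tstar \<beta>) = 2/\<beta>" using tstar_props[OF b] by auto
  have mt: "tstar \<beta> < m" using m0_gt_tstar[OF b r] by (simp add: m_def)
  have "9 * tstar \<beta> * (1 - 2 * tstar \<beta>) < 9 * m * (1 - 2*m)" using quad_mono[OF t(1) mt m(2)] .
  then have q: "2/\<beta> < 9 * m * (1 - 2*m)" using t by simp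
  have fm: "ffun r m = 2 / (9 * m * (1 - 2*m))" using ffun_m0[OF r(1) r1] by (simp add: m_def)
  have "2 / (9 * m * (1 - 2*m)) < 2 / (2/\<beta>)"
  proof (rule divide_strict_left_mono)
    have "9 * m * (1 - 2*m) > 0" using m by simp
    moreover have "2/\<beta> > 0" using b by simp
    ultimately show "0 < 9 * m * (1 - 2*m) * (2/\<beta>)" by simp
  qed (use q in auto)
  then have fm_lt: "ffun r m < \<beta>" using fm b by simp
  define Lk where "Lk = Lf k"
  have Lk: "Lk > 0" using Lf_pos k by (simp add: Lk_def)
  define \<delta> where "\<delta> = min ((k - m)/2) (Lk / (9*\<beta>))"
  have d: "0 < \<delta>" "\<delta> \<le> (k - m)/2" "\<delta> \<le> Lk / (9*\<beta>)" 
    using m Lk b unfolding \<delta>_def by (auto simp: min_def)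
  define th where "th = k - \<delta>"
  have th: "m < th" "th < k" "0 < th" using d m by (auto simp: th_def)
  have D: "1 - r - 3*th = 3*\<delta>" by (simp add: th_def k_def kfun_def field_simps)
  have Lth: "Lf th \<ge> Lk" unfolding Lk_def using th k by (intro Lf_mono) auto
  have "ffun r th = 2 / (9*\<delta>) * Lf th" unfolding ffun_Lf D by simp
  also have "\<dots> \<ge> 2 / (9*\<delta>) * Lk" using Lth d by (intro mult_left_mono) auto
  finally have f1: "ffun r th \<ge> 2 / (9*\<delta>) * Lk" .
  have "9*\<delta> * \<beta> \<le> Lk" using d b by (simp add: field_simps)
  then have "\<beta> \<le> 2 / (9*\<delta>) * Lk" using d b Lk by (simp add: field_simps)
  then have fth: "\<beta> \<le> ffun r th" using f1 by simp
  obtain u where u: "m \<le> u" "u \<le> th" "ffun r u = \<beta>"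
    using IVT'[of "ffun r" m \<beta> th] fm_lt fth th ffun_cont[of m th r] m k r r1 by (auto simp: k_def)
  then have "u \<noteq> m" using fm_lt by auto
  then show ?thesis using u th by (intro exI[of _ u]) (auto simp: m_def k_def)
qed

lemma u_props: assumes b: "\<beta> > 2" and r: "0 < r" "r < r2 \<beta>"
  shows "m0 r < ubeta \<beta> r \<and> ubeta \<beta> r < kfun r \<and> ffun r (ubeta \<beta> r) = \<beta>"
proof -
  have r1: "r < 1" using r r2_props[OF b] by simp
  obtain u where u: "m0 r < u" "u < kfun r" "ffun r u = \<beta>" using u_ex[OF b r] by blast
  have "ubeta \<beta> r = u" unfolding ubeta_def
  proof (rule the_equality)
    fix v assume v: "m0 r < v \<and> v < kfun r \<and> ffun r v = \<beta>"
    show "v = u"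
    proof (rule ccontr)
      assume "v \<noteq> u"
      then consider "v < u" | "u < v" by linarith
      then show False
      proof cases
        case 1 then show False using ffun_inc[OF r(1) r1, of v u] u v by auto
      next
        case 2 then show False using ffun_inc[OF r(1) r1, of u v] u v by auto
      qed
    qed
  qed (use u in auto)
  then show ?thesis using u by simp
qed

lemma r1_nonneg: assumes b: "\<beta> > 2" shows "r1 \<beta> \<ge> 0"
proof -
  have x: "3*\<beta>/2 - 2 > 0" using b by simp
  have "ln (3*\<beta>/2 - 2) \<le> 3*\<beta>/2 - 2 - 1" using ln_le_minus_one[OF x] .
  then have "2/(3*\<beta>) * ln (3*\<beta>/2 - 2) \<le> 2/(3*\<beta>) * (3*\<beta>/2 - 3)"
    using b by (intro mult_left_mono) auto
  also have "\<dots> = 1 - 2/\<beta>" using b by (simp add: field_simps)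
  finally show ?thesis unfolding r1_def by simp
qed

lemma Lf_lbeta: "\<beta> > 2 \<Longrightarrow> Lf (lbeta \<beta>) = ln (3*\<beta>/2 - 2)"
  unfolding Lf_def lbeta_def by (simp add: field_simps)

lemma u_lt_l: assumes b: "\<beta> > 2" and r: "r1 \<beta> < r" "r < r2 \<beta>"
  shows "ubeta \<beta> r < lbeta \<beta>"
proof -
  have r0: "0 < r" using r r1_nonneg[OF b] by simp
  have r1': "r < 1" using r r2_props[OF b] by simp
  have u: "m0 r < ubeta \<beta> r" "ubeta \<beta> r < kfun r" "ffun r (ubeta \<beta> r) = \<beta>" using u_props[OF b r0 r(2)] by auto
  define l where "l = lbeta \<beta>"
  have l: "0 < l" "l < 1/3" "3*l = 2/\<beta>" using b by (auto simp: l_def lbeta_def field_simps)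
  have Ll: "Lf l > 0" using Lf_pos l by simp
  have m: "0 < m0 r" "m0 r < 1/4" "hfun (m0 r) = r" using m0_props[OF r0 r1'] by auto
  show ?thesis
  proof (cases "kfun r \<le> l")
    case True then show ?thesis using u by (simp add: l_def)
  next
    case False
    then have lk: "l < kfun r" by simp
    have hl: "hfun l = 1 - 3*l - 3*l * (1 - 2*l) * Lf l" unfolding hfun_Lf by simp
    have r1v0: "r1 \<beta> = 1 - 2/\<beta> - l * Lf l" unfolding r1_def using Lf_lbeta[OF b] by (simp add: l_def lbeta_def)
    have r1v: "r1 \<beta> = 1 - 3*l - l * Lf l" using r1v0 l by simp
    have "r1 \<beta> - hfun l = Lf l * l * (2 - 6*l)" unfolding hl r1v by (simp add: algebra_simps)
    moreover have "Lf l * l * (2 - 6*l) > 0" using Ll l by (intro mult_pos_pos) auto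
    ultimately have hl_lt: "hfun l < r" using r by simp
    have ml: "m0 r < l"
    proof (rule ccontr)
      assume "\<not> m0 r < l"
      then have "l \<le> m0 r" by simp
      then have "hfun (m0 r) \<le> hfun l" using hfun_dec[of l "m0 r"] l m by (cases "l = m0 r") auto
      then show False using m hl_lt by simp
    qed
    have fl: "ffun r l > \<beta>"
    proof -
      have D: "1 - r - 3*l > 0" using lk by (simp add: kfun_def)
      have "\<beta> * (1 - r - 3*l) < 2/3 * Lf l"
      proof -
        have "r > 1 - 2/\<beta> - l * Lf l" using r r1v0 by simp
        then have "\<beta> * (1 - r - 2/\<beta>) < \<beta> * (l * Lf l)" using b by (intro mult_strict_left_mono) auto
        moreover have "\<beta> * (l * Lf l) = 2/3 * Lf l" using l b by (simp add: field_simps)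
        moreover have "\<beta> * (1 - r - 2/\<beta>) = \<beta> * (1 - r - 3*l)" using l by simp
        ultimately show ?thesis by simp
      qed
      then show ?thesis unfolding ffun_Lf using D by (simp add: field_simps)
    qed
    show ?thesis
    proof (rule ccontr)
      assume "\<not> ubeta \<beta> r < lbeta \<beta>"
      then have "l \<le> ubeta \<beta> r" by (simp add: l_def)
      then have "ffun r l \<le> ffun r (ubeta \<beta> r)"
        using ffun_inc[OF r0 r1', of l "ubeta \<beta> r"] ml u by (cases "l = ubeta \<beta> r") auto
      then show False using fl u by simp
    qed
  qed
qed



lemma xlog3x_pos: "t > 0 \<Longrightarrow> xlog3x t = t * ln (3*t)"
  unfolding xlog3x_def by simp

lemma xlog3x_deriv: assumes "t > 0" shows "(xlog3x has_real_derivative ln (3*t) + 1) (at t)"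
proof (rule has_field_derivative_transform_within_open[where S = "{0<..}" and f = "\<lambda>t. t * ln (3*t)"])
  show "((\<lambda>t. t * ln (3*t)) has_real_derivative ln (3*t) + 1) (at t)"
    using assms by (auto intro!: derivative_eq_intros simp: field_simps)
qed (use assms in \<open>auto simp: xlog3x_def\<close>)

lemma xlnx_bound: assumes "0 < t" "t < 1/3" shows "- (2/3) * sqrt (3*t) \<le> t * ln (3*t)" "t * ln (3*t) \<le> 0"
proof -
  define s where "s = sqrt (3*t)"
  have s: "0 < s" "s < 1" "s^2 = 3*t" using assms by (auto simp: s_def real_sqrt_less_iff)
  have "ln (1/s) < 1/s" using s by (intro ln_less_self) auto
  then have "- ln s < 1/s" using s by (simp add: ln_div)
  moreover have "ln (3*t) = 2 * ln s"
  proof -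
    have "ln (3*t) = ln (s*s)" using s by (simp add: power2_eq_square)
    also have "\<dots> = ln s + ln s" using s by (simp add: ln_mult)
    finally show ?thesis by simp
  qed
  ultimately have "ln (3*t) > - 2/s" by simp
  then have "t * ln (3*t) \<ge> t * (- 2/s)" using assms by (intro mult_left_mono) auto
  moreover have "t * (- 2/s) = - (2/3) * s" using s by (simp add: field_simps power2_eq_square)
  ultimately show "- (2/3) * sqrt (3*t) \<le> t * ln (3*t)" by (simp add: s_def)
  have "ln (3*t) \<le> 0" using assms by simp
  then show "t * ln (3*t) \<le> 0" using assms by (simp add: mult_nonneg_nonpos)
qed

lemma xlog3x_tendsto0: "(xlog3x \<longlongrightarrow> 0) (at_right 0)"
proof (rule tendsto_sandwich[where f = "\<lambda>t. - (2/3) * sqrt (3*t)" and h = "\<lambda>_. 0"])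
  have ev: "eventually (\<lambda>t. 0 < t \<and> t < (1/3::real)) (at_right 0)"
    unfolding eventually_at_right_field by (intro exI[of _ "1/3"]) auto
  show "eventually (\<lambda>t. - (2/3) * sqrt (3*t) \<le> xlog3x t) (at_right 0)"
    using ev by eventually_elim (use xlnx_bound(1) in \<open>simp add: xlog3x_pos\<close>)
  show "eventually (\<lambda>t. xlog3x t \<le> 0) (at_right 0)"
    using ev by eventually_elim (use xlnx_bound(2) in \<open>simp add: xlog3x_pos\<close>)
  have "((\<lambda>t. - (2/3) * sqrt (3*t)) \<longlongrightarrow> - (2/3) * sqrt (3*0)) (at_right (0::real))"
    by (intro tendsto_intros)
  then show "((\<lambda>t. - (2/3) * sqrt (3*t)) \<longlongrightarrow> 0) (at_right (0::real))" by simp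
qed simp

lemma xlog3x_cont: "continuous_on {0..} xlog3x"
  unfolding continuous_on_eq_continuous_within
proof
  fix x :: real assume x: "x \<in> {0..}"
  show "continuous (at x within {0..}) xlog3x"
  proof (cases "x = 0")
    case True
    have "(xlog3x \<longlongrightarrow> xlog3x 0) (at 0 within {0..})"
      using xlog3x_tendsto0 by (simp add: at_within_Ici_at_right xlog3x_def)
    then show ?thesis using True by (simp add: continuous_within)
  next
    case False
    then have "x > 0" using x by simp
    then have "isCont xlog3x x" using xlog3x_deriv DERIV_isCont by blast
    then show ?thesis by (rule continuous_at_imp_continuous_at_within)
  qed
qed



definition ell :: "real \<Rightarrow> real" where "ell x = ln (1 + x) - ln (1 - x)"

lemma ell_deriv: "- 1 < x \<Longrightarrow> x < 1 \<Longrightarrow> (ell has_real_derivative (2 / (1 - x^2))) (at x)"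
  unfolding ell_def
  by (auto intro!: derivative_eq_intros simp: field_simps power2_eq_square)

lemma ell_gt: assumes "0 < x" "x < 1" shows "ell x > 2*x"
proof -
  have "(\<lambda>x. ell x - 2*x) 0 < (\<lambda>x. ell x - 2*x) x"
  proof (rule deriv_strict_inc[where f = "\<lambda>x. ell x - 2*x" and a = 0 and b = x and f' = "\<lambda>x. 2 / (1 - x^2) - 2"])
    fix y assume "0 \<le> y" "y \<le> x"
    then show "((\<lambda>x. ell x - 2*x) has_real_derivative 2 / (1 - y^2) - 2) (at y)"
      using assms by (auto intro!: derivative_eq_intros ell_deriv)
  next
    fix y assume y: "0 < y" "y < x"
    then have "y^2 < 1" "0 < y^2" using assms power_strict_mono[of y 1 2] by auto
    then show "2 / (1 - y^2) - 2 > 0" by (simp add: field_simps)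
  qed (use assms in auto)
  then show ?thesis by (simp add: ell_def)
qed

definition Aq :: "real \<Rightarrow> real" where "Aq x = ell x / x"

lemma Nq_pos: assumes "0 < x" "x < 1" shows "ell x < 2*x / (1 - x^2)"
proof -
  have "(\<lambda>x. 2*x / (1 - x^2) - ell x) 0 < (\<lambda>x. 2*x / (1 - x^2) - ell x) x"
  proof (rule deriv_strict_inc[where f = "\<lambda>x. 2*x / (1 - x^2) - ell x" and a = 0 and b = x and f' = "\<lambda>x. (2 * (1 - x^2) + 2*x*(2*x)) / (1 - x^2)^2 - 2 / (1 - x^2)"])
    fix y assume y: "0 \<le> y" "y \<le> x"
    then have "y^2 < 1" using assms by (simp add: abs_square_less_1)
    then have nz: "1 - y^2 \<noteq> 0" by simp
    show "((\<lambda>x. 2*x / (1 - x^2) - ell x) has_real_derivative (2 * (1 - y^2) + 2*y*(2*y)) / (1 - y^2)^2 - 2 / (1 - y^2)) (at y)"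
      using y assms nz by (auto intro!: derivative_eq_intros ell_deriv simp: power2_eq_square field_simps)
  next
    fix y assume y: "0 < y" "y < x"
    then have y2: "y^2 < 1" "0 < y^2" using assms by (auto simp: abs_square_less_1)
    have g: "\<And>w::real. w \<noteq> 0 \<Longrightarrow> (2 * w + 4*y^2) / w^2 - 2 / w = 4*y^2 / w^2"
      by (simp add: field_simps power2_eq_square)
    have "(2 * (1 - y^2) + 2*y*(2*y)) / (1 - y^2)^2 - 2 / (1 - y^2) = 4*y^2 / (1 - y^2)^2"
      using g[of "1 - y^2"] y2 by (simp add: power2_eq_square)
    then show "(2 * (1 - y^2) + 2*y*(2*y)) / (1 - y^2)^2 - 2 / (1 - y^2) > 0" using y2 by simp
  qed (use assms in auto)
  then show ?thesis by (simp add: ell_def)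
qed

lemma Aq_mono: assumes "0 < x" "x < y" "y < 1" shows "Aq x < Aq y"
proof (rule deriv_strict_inc[where f = Aq and a = x and b = y and f' = "\<lambda>x. (2 / (1 - x^2) * x - ell x) / x^2"])
  fix z assume z: "x \<le> z" "z \<le> y"
  then have "0 < z" "z < 1" using assms by auto
  then show "(Aq has_real_derivative (2 / (1 - z^2) * z - ell z) / z^2) (at z)"
    unfolding Aq_def[abs_def]
    by (auto intro!: derivative_eq_intros ell_deriv simp: power2_eq_square)
next
  fix z assume z: "x < z" "z < y"
  then have "0 < z" "z < 1" using assms by auto
  then have "ell z < 2 / (1 - z^2) * z" using Nq_pos by simp
  then show "(2 / (1 - z^2) * z - ell z) / z^2 > 0" using \<open>0 < z\<close> by simp
qed (use assms in auto)



definition psi :: "real \<Rightarrow> real \<Rightarrow> real \<Rightarrow> real" where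
  "psi \<beta> a d = - (3/2) * d^2 + (1/\<beta>) * (xlog3x (a + d) + xlog3x (a - d))"

definition Cst :: "real \<Rightarrow> real \<Rightarrow> real \<Rightarrow> real" where
  "Cst \<beta> a r = - (1/2) * (1 - 3*a)^2 + (1/\<beta>) * xlog3x (1 - 2*a) + r * (1 - 2*a) - r * a"

lemma F_line: "Fbeta \<beta> (a + d, a - d) r = Cst \<beta> a r + psi \<beta> a d"
  unfolding Fbeta_closed Cst_def psi_def by (simp add: algebra_simps power2_eq_square)

lemma psi_sym: "psi \<beta> a (- d) = psi \<beta> a d"
  unfolding psi_def by simp

lemma ln_ell: assumes "0 < a" "- a < d" "d < a"
  shows "ln (3*(a+d)) - ln (3*(a-d)) = ell (d/a)"
proof -
  have "3*(a+d) = (3*a) * (1 + d/a)" "3*(a-d) = (3*a) * (1 - d/a)" using assms by (auto simp: field_simps)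
  moreover have "1 + d/a > 0" "1 - d/a > 0" using assms by (auto simp: field_simps)
  ultimately show ?thesis unfolding ell_def using assms by (simp add: ln_mult)
qed

lemma psi_deriv: assumes "0 < a" "- a < d" "d < a"
  shows "(psi \<beta> a has_real_derivative (- 3 * d + (1/\<beta>) * ell (d/a))) (at d)"
proof -
  have p: "a + d > 0" "a - d > 0" using assms by auto
  have g1: "((\<lambda>d. a + d) has_real_derivative 1) (at d)" by (auto intro!: derivative_eq_intros)
  have g2: "((\<lambda>d. a - d) has_real_derivative (- 1)) (at d)" by (auto intro!: derivative_eq_intros)
  have h1: "((\<lambda>d. xlog3x (a + d)) has_real_derivative (ln (3*(a+d)) + 1) * 1) (at d)"
    using DERIV_chain2[where f = xlog3x and g = "\<lambda>d. a + d", OF xlog3x_deriv[OF p(1)] g1] by simp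
  have h2: "((\<lambda>d. xlog3x (a - d)) has_real_derivative (ln (3*(a-d)) + 1) * (- 1)) (at d)"
    using DERIV_chain2[where f = xlog3x and g = "\<lambda>d. a - d", OF xlog3x_deriv[OF p(2)] g2] by simp
  have D: "(psi \<beta> a has_real_derivative (- (3/2) * (2 * d) + (1/\<beta>) * ((ln (3*(a+d)) + 1) * 1 + (ln (3*(a-d)) + 1) * (- 1)))) (at d)"
    unfolding psi_def[abs_def]
    by (rule derivative_eq_intros h1 h2 refl | simp)+
  have eq: "- (3/2) * (2 * d) + (1/\<beta>) * ((ln (3*(a+d)) + 1) * 1 + (ln (3*(a-d)) + 1) * (- 1))
     = - 3 * d + (1/\<beta>) * ell (d/a)" using ln_ell[OF assms] by (simp add: algebra_simps)
  show ?thesis using D unfolding eq .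
qed

lemma psi_cont: assumes "0 \<le> p" "q \<le> a" shows "continuous_on {p..q} (psi \<beta> a)"
proof -
  have c1: "continuous_on {p..q} (\<lambda>d. xlog3x (a + d))"
    by (rule continuous_on_compose2[OF xlog3x_cont]) (use assms in \<open>auto intro!: continuous_intros\<close>)
  have c2: "continuous_on {p..q} (\<lambda>d. xlog3x (a - d))"
    by (rule continuous_on_compose2[OF xlog3x_cont]) (use assms in \<open>auto intro!: continuous_intros\<close>)
  show ?thesis unfolding psi_def[abs_def] by (intro continuous_intros c1 c2)
qed

lemma psi_convex_case: assumes b: "\<beta> > 0" and a: "0 < a" "\<beta> * a < 2/3" and d: "0 < d" "d \<le> a"
  shows "psi \<beta> a 0 < psi \<beta> a d"
proof (rule DERIV_pos_imp_increasing_open[OF d(1)])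
  show "continuous_on {0..d} (psi \<beta> a)" by (rule psi_cont) (use d in auto)
next
  fix x assume x: "0 < x" "x < d"
  have "ell (x/a) > 2 * (x/a)" using x d a by (intro ell_gt) auto
  then have "(1/\<beta>) * ell (x/a) > (1/\<beta>) * (2 * (x/a))" using b by (intro mult_strict_left_mono) auto
  moreover have "(1/\<beta>) * (2 * (x/a)) > 3 * x"
  proof -
    have "3 * (\<beta> * a) < 2" using a by simp
    then have "3 * x * (\<beta> * a) < 2 * x" using x by simp
    then show ?thesis using a b by (simp add: field_simps)
  qed
  ultimately have "- 3 * x + (1/\<beta>) * ell (x/a) > 0" by simp
  moreover have "(psi \<beta> a has_real_derivative (- 3 * x + (1/\<beta>) * ell (x/a))) (at x)"
    using x d a by (intro psi_deriv) auto
  ultimately show "\<exists>y. (psi \<beta> a has_real_derivative y) (at x) \<and> 0 < y" by blast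
qed

lemma psi_deriv_Aq: assumes "0 < a" "0 < x" "\<beta> > 0"
  shows "- 3 * x + (1/\<beta>) * ell (x/a) = (x / (a*\<beta>)) * (Aq (x/a) - 3*\<beta>*a)"
  using assms unfolding Aq_def by (simp add: field_simps)

lemma psi_case1:
  assumes b: "\<beta> > 0" and a: "0 < a" and ds: "0 < ds" "ds < a" and crit: "ell (ds/a) = 3 * \<beta> * ds"
  shows "\<And>d. 0 \<le> d \<Longrightarrow> d < ds \<Longrightarrow> psi \<beta> a ds < psi \<beta> a d"
    and "\<And>d. ds < d \<Longrightarrow> d \<le> a \<Longrightarrow> psi \<beta> a ds < psi \<beta> a d"
proof -
  have Ads: "Aq (ds/a) = 3*\<beta>*a" using crit ds a unfolding Aq_def by (simp add: field_simps)
  fix d assume d: "0 \<le> d" "d < ds"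
  show "psi \<beta> a ds < psi \<beta> a d"
  proof (rule DERIV_neg_imp_decreasing_open[OF d(2)])
    show "continuous_on {d..ds} (psi \<beta> a)" by (rule psi_cont) (use d ds in auto)
  next
    fix x assume x: "d < x" "x < ds"
    have "Aq (x/a) < Aq (ds/a)" using x d ds a by (intro Aq_mono) (auto simp: field_simps)
    then have "(x / (a*\<beta>)) * (Aq (x/a) - 3*\<beta>*a) < 0"
      using Ads x d a b by (intro mult_pos_neg) auto
    then have "- 3 * x + (1/\<beta>) * ell (x/a) < 0" using psi_deriv_Aq[OF a _ b, of x] x d by simp
    moreover have "(psi \<beta> a has_real_derivative (- 3 * x + (1/\<beta>) * ell (x/a))) (at x)"
      using x d ds a by (intro psi_deriv) auto
    ultimately show "\<exists>y. (psi \<beta> a has_real_derivative y) (at x) \<and> y < 0" by blast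
  qed
next
  have Ads: "Aq (ds/a) = 3*\<beta>*a" using crit ds a unfolding Aq_def by (simp add: field_simps)
  fix d assume d: "ds < d" "d \<le> a"
  show "psi \<beta> a ds < psi \<beta> a d"
  proof (rule DERIV_pos_imp_increasing_open[OF d(1)])
    show "continuous_on {ds..d} (psi \<beta> a)" by (rule psi_cont) (use d ds in auto)
  next
    fix x assume x: "ds < x" "x < d"
    have "Aq (ds/a) < Aq (x/a)" using x d ds a by (intro Aq_mono) (auto simp: field_simps)
    then have "(x / (a*\<beta>)) * (Aq (x/a) - 3*\<beta>*a) > 0"
      using Ads x ds a b by (intro mult_pos_pos) auto
    then have "- 3 * x + (1/\<beta>) * ell (x/a) > 0" using psi_deriv_Aq[OF a _ b, of x] x ds by simp
    moreover have "(psi \<beta> a has_real_derivative (- 3 * x + (1/\<beta>) * ell (x/a))) (at x)"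
      using x d ds a by (intro psi_deriv) auto
    ultimately show "\<exists>y. (psi \<beta> a has_real_derivative y) (at x) \<and> y > 0" by blast
  qed
qed



lemma line_param: fixes y :: "real \<times> real" assumes "fst y + snd y = 2*a"
  shows "y = (a + (fst y - snd y)/2, a - (fst y - snd y)/2)"
  using assms by (cases y) (auto simp: field_simps)

lemma line_F: assumes "fst y + snd y = 2*a"
  shows "Fbeta \<beta> y r = Cst \<beta> a r + psi \<beta> a ((fst y - snd y)/2)"
  using F_line[of \<beta> a "(fst y - snd y)/2" r] line_param[OF assms] by metis

lemma line_Xi: assumes "fst y + snd y = 2*a" "y \<in> Xi"
  shows "\<bar>(fst y - snd y)/2\<bar> \<le> a"
  using assms by (cases y) (auto simp: Xi_def)

lemma case2:
  assumes b: "\<beta> > 2" and r: "r1 \<beta> < r" "r < r2 \<beta>"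
  shows "{x \<in> lline \<beta> r. \<forall>y \<in> lline \<beta> r. Fbeta \<beta> x r \<le> Fbeta \<beta> y r} = {pbeta \<beta> r}"
proof -
  have r0: "0 < r" using r r1_nonneg[OF b] by simp
  have r1': "r < 1" using r r2_props[OF b] by simp
  define u where "u = ubeta \<beta> r"
  have up: "m0 r < u" "u < kfun r" using u_props[OF b r0 r(2)] by (auto simp: u_def)
  have u0: "0 < u" using up m0_props[OF r0 r1'] by simp
  have ul: "u < lbeta \<beta>" using u_lt_l[OF b r] by (simp add: u_def)
  have bu: "\<beta> * u < 2/3" using ul b by (simp add: lbeta_def field_simps)
  have u1: "2*u \<le> 1" using up kfun_bounds[OF r0 r1'] by simp
  have LL: "lline \<beta> r = {x. fst x + snd x = 2*u} \<inter> Xi" using r by (simp add: lline_def u_def)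
  have P: "pbeta \<beta> r = (u, u)" by (simp add: pbeta_def u_def)
  have Pin: "(u, u) \<in> lline \<beta> r" unfolding LL using u0 u1 by (simp add: Xi_def)
  have FP: "Fbeta \<beta> (u,u) r = Cst \<beta> u r + psi \<beta> u 0" using line_F[of "(u,u)" u \<beta> r] by simp
  have key: "\<And>y. y \<in> lline \<beta> r \<Longrightarrow> y \<noteq> (u,u) \<Longrightarrow> Fbeta \<beta> (u,u) r < Fbeta \<beta> y r"
  proof -
    fix y assume y: "y \<in> lline \<beta> r" "y \<noteq> (u,u)"
    define d where "d = (fst y - snd y)/2"
    have yl: "fst y + snd y = 2*u" "y \<in> Xi" using y LL by auto
    have da: "\<bar>d\<bar> \<le> u" using line_Xi[OF yl] by (simp add: d_def)
    have Fy: "Fbeta \<beta> y r = Cst \<beta> u r + psi \<beta> u d" using line_F[OF yl(1)] by (simp add: d_def)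
    have "d \<noteq> 0" using y line_param[OF yl(1)] by (auto simp: d_def)
    then have "psi \<beta> u 0 < psi \<beta> u \<bar>d\<bar>" using psi_convex_case[OF _ u0 bu, of "\<bar>d\<bar>"] b da by simp
    moreover have "psi \<beta> u \<bar>d\<bar> = psi \<beta> u d" using psi_sym[of \<beta> u d] by (cases "d \<ge> 0") auto
    ultimately show "Fbeta \<beta> (u,u) r < Fbeta \<beta> y r" using Fy FP by simp
  qed
  show ?thesis
  proof (rule set_eqI, rule iffI)
    fix x assume x: "x \<in> {x \<in> lline \<beta> r. \<forall>y \<in> lline \<beta> r. Fbeta \<beta> x r \<le> Fbeta \<beta> y r}"
    then have "Fbeta \<beta> x r \<le> Fbeta \<beta> (u,u) r" "x \<in> lline \<beta> r" using Pin by auto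
    then show "x \<in> {pbeta \<beta> r}" using key[of x] P by force
  next
    fix x assume "x \<in> {pbeta \<beta> r}"
    then have "x = (u,u)" using P by simp
    then show "x \<in> {x \<in> lline \<beta> r. \<forall>y \<in> lline \<beta> r. Fbeta \<beta> x r \<le> Fbeta \<beta> y r}"
      using Pin key by (auto simp: less_imp_le) (metis order_refl less_imp_le)
  qed
qed



lemma G_deriv: "\<beta> > 0 \<Longrightarrow> x > 0 \<Longrightarrow> (Gfun \<beta> has_real_derivative (1/(\<beta>*x) - 3/2)) (at x)"
  unfolding Gfun_def[abs_def] by (auto intro!: derivative_eq_intros simp: field_simps)

lemma G_cont: "\<beta> > 0 \<Longrightarrow> 0 < a \<Longrightarrow> continuous_on {a..b} (Gfun \<beta>)"
  by (rule continuous_at_imp_continuous_on) (auto intro!: DERIV_isCont G_deriv)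

lemma l_pos: "\<beta> > 2 \<Longrightarrow> 0 < lbeta \<beta> \<and> lbeta \<beta> < 1/3"
  by (auto simp: lbeta_def field_simps)

lemma G_inc: assumes b: "\<beta> > 2" and xy: "0 < x" "x < y" "y \<le> lbeta \<beta>" shows "Gfun \<beta> x < Gfun \<beta> y"
proof (rule deriv_strict_inc[where f = "Gfun \<beta>" and f' = "\<lambda>x. 1/(\<beta>*x) - 3/2"])
  fix z assume "x \<le> z" "z \<le> y" then show "(Gfun \<beta> has_real_derivative 1/(\<beta>*z) - 3/2) (at z)"
    using xy b by (intro G_deriv) auto
next
  fix z assume z: "x < z" "z < y"
  then have "\<beta>*z < \<beta> * lbeta \<beta>" using xy b by (intro mult_strict_left_mono) auto
  then have "\<beta>*z < 2/3" using b by (simp add: lbeta_def)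
  then show "1/(\<beta>*z) - 3/2 > 0" using z xy b by (simp add: field_simps)
qed (use xy in auto)

lemma G_dec: assumes b: "\<beta> > 2" and xy: "lbeta \<beta> \<le> x" "x < y" shows "Gfun \<beta> y < Gfun \<beta> x"
proof (rule deriv_strict_dec[where f = "Gfun \<beta>" and f' = "\<lambda>x. 1/(\<beta>*x) - 3/2"])
  have l: "0 < lbeta \<beta>" using l_pos[OF b] by simp
  fix z assume "x \<le> z" "z \<le> y" then show "(Gfun \<beta> has_real_derivative 1/(\<beta>*z) - 3/2) (at z)"
    using xy l b by (intro G_deriv) auto
next
  have l: "0 < lbeta \<beta>" using l_pos[OF b] by simp
  fix z assume z: "x < z" "z < y"
  then have "\<beta>*z > \<beta> * lbeta \<beta>" using xy b by (intro mult_strict_left_mono) auto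
  then have "\<beta>*z > 2/3" using b by (simp add: lbeta_def)
  then show "1/(\<beta>*z) - 3/2 < 0" using z xy b l by (simp add: field_simps)
qed (use xy in auto)

lemma G_le_g: assumes b: "\<beta> > 2" and x: "0 < x" shows "Gfun \<beta> x \<le> gbeta \<beta>"
  using G_inc[OF b x, of "lbeta \<beta>"] G_dec[OF b _, of "lbeta \<beta>" x] unfolding gbeta_def
  by (cases "x < lbeta \<beta>"; cases "x = lbeta \<beta>") auto

lemma G_lt_neg: assumes b: "\<beta> > 2" and x: "0 < x" shows "Gfun \<beta> x < - x"
proof -
  have "ln x < x" using x by simp
  then have A: "ln x / \<beta> < x / \<beta>" using b by (intro divide_strict_right_mono) auto
  have B: "x / \<beta> < x / 2" using b x by (intro divide_strict_left_mono) auto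
  have "Gfun \<beta> x = ln x / \<beta> - 3/2*x" by (simp add: Gfun_def)
  then show ?thesis using A B by linarith
qed

lemma H_ex: assumes b: "\<beta> > 2" and y: "y \<le> gbeta \<beta>"
  shows "\<exists>x. 0 < x \<and> x \<le> lbeta \<beta> \<and> Gfun \<beta> x = y"
proof -
  define l where "l = lbeta \<beta>"
  have l: "0 < l" using l_pos[OF b] by (simp add: l_def)
  define x0 where "x0 = exp (\<beta> * y)"
  have x0: "0 < x0" by (simp add: x0_def)
  have Gx0: "Gfun \<beta> x0 < y" using x0 b unfolding Gfun_def x0_def by simp
  have x0l: "x0 < l"
  proof (rule ccontr)
    assume "\<not> x0 < l"
    then have "ln l \<le> ln x0" using l by simp
    then have "ln l \<le> \<beta> * y" by (simp add: x0_def)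
    then have "ln l / \<beta> \<le> y" using b by (simp add: field_simps)
    moreover have "gbeta \<beta> < ln l / \<beta>" using l b unfolding gbeta_def Gfun_def l_def by simp
    ultimately show False using y by simp
  qed
  obtain x where "x0 \<le> x" "x \<le> l" "Gfun \<beta> x = y"
    using IVT'[of "Gfun \<beta>" x0 y l] Gx0 y x0l G_cont[of \<beta> x0 l] b x0 by (auto simp: gbeta_def l_def)
  then show ?thesis using x0 by (intro exI[of _ x]) (auto simp: l_def)
qed

lemma K_ex: assumes b: "\<beta> > 2" and y: "y \<le> gbeta \<beta>"
  shows "\<exists>x. lbeta \<beta> \<le> x \<and> Gfun \<beta> x = y"
proof -
  define l where "l = lbeta \<beta>"
  have l: "0 < l" using l_pos[OF b] by (simp add: l_def)
  define x1 where "x1 = max l (- y)"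
  have x1: "l \<le> x1" "0 < x1" using l by (auto simp: x1_def)
  have "Gfun \<beta> x1 < - x1" using G_lt_neg[OF b x1(2)] .
  then have Gx1: "Gfun \<beta> x1 \<le> y" by (simp add: x1_def)
  obtain x where "l \<le> x" "x \<le> x1" "Gfun \<beta> x = y"
    using IVT2'[of "Gfun \<beta>" x1 y l] Gx1 y x1 G_cont[of \<beta> l x1] b l by (auto simp: gbeta_def l_def)
  then show ?thesis by (auto simp: l_def)
qed

lemma H_uniq: assumes b: "\<beta> > 2" and "0 < x" "x \<le> lbeta \<beta>" "0 < x'" "x' \<le> lbeta \<beta>" "Gfun \<beta> x = Gfun \<beta> x'"
  shows "x = x'"
  using G_inc[OF b, of x x'] G_inc[OF b, of x' x] assms by (cases x x' rule: linorder_cases) auto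

lemma K_uniq: assumes b: "\<beta> > 2" and "lbeta \<beta> \<le> x" "lbeta \<beta> \<le> x'" "Gfun \<beta> x = Gfun \<beta> x'"
  shows "x = x'"
  using G_dec[OF b, of x x'] G_dec[OF b, of x' x] assms by (cases x x' rule: linorder_cases) auto

lemma H_props: assumes b: "\<beta> > 2" and y: "y \<le> gbeta \<beta>"
  shows "0 < Hfun \<beta> y \<and> Hfun \<beta> y \<le> lbeta \<beta> \<and> Gfun \<beta> (Hfun \<beta> y) = y"
proof -
  obtain x where x: "0 < x" "x \<le> lbeta \<beta>" "Gfun \<beta> x = y" using H_ex[OF b y] by blast
  have "Hfun \<beta> y = x" unfolding Hfun_def
    by (rule the_equality) (use x H_uniq[OF b] in auto)
  then show ?thesis using x by simp
qed

lemma K_props: assumes b: "\<beta> > 2" and y: "y \<le> gbeta \<beta>"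
  shows "lbeta \<beta> \<le> Kfun \<beta> y \<and> Gfun \<beta> (Kfun \<beta> y) = y"
proof -
  obtain x where x: "lbeta \<beta> \<le> x" "Gfun \<beta> x = y" using K_ex[OF b y] by blast
  have "Kfun \<beta> y = x" unfolding Kfun_def
    by (rule the_equality) (use x K_uniq[OF b] in auto)
  then show ?thesis using x by simp
qed

lemma H_eq: assumes b: "\<beta> > 2" and x: "0 < x" "x \<le> lbeta \<beta>" shows "Hfun \<beta> (Gfun \<beta> x) = x"
  using H_props[OF b G_le_g[OF b x(1)]] H_uniq[OF b] x by blast

lemma K_eq: assumes b: "\<beta> > 2" and x: "lbeta \<beta> \<le> x" shows "Kfun \<beta> (Gfun \<beta> x) = x"
proof -
  have "0 < x" using x l_pos[OF b] by simp
  then show ?thesis using K_props[OF b G_le_g[OF b]] K_uniq[OF b] x by blast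
qed

lemma HK_g: assumes b: "\<beta> > 2" shows "Hfun \<beta> (gbeta \<beta>) = lbeta \<beta>" "Kfun \<beta> (gbeta \<beta>) = lbeta \<beta>"
  using H_eq[OF b, of "lbeta \<beta>"] K_eq[OF b, of "lbeta \<beta>"] l_pos[OF b] by (auto simp: gbeta_def)

lemma HK_strict: assumes b: "\<beta> > 2" and y: "y < gbeta \<beta>"
  shows "Hfun \<beta> y < lbeta \<beta>" "lbeta \<beta> < Kfun \<beta> y"
  using H_props[OF b, of y] K_props[OF b, of y] y by (auto simp: gbeta_def less_le)

lemma H_mono: assumes b: "\<beta> > 2" and y: "y < y'" "y' \<le> gbeta \<beta>" shows "Hfun \<beta> y < Hfun \<beta> y'"
proof (rule ccontr)
  have h: "0 < Hfun \<beta> y" "Hfun \<beta> y \<le> lbeta \<beta>" "Gfun \<beta> (Hfun \<beta> y) = y" using H_props[OF b, of y] y by auto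
  have h': "0 < Hfun \<beta> y'" "Hfun \<beta> y' \<le> lbeta \<beta>" "Gfun \<beta> (Hfun \<beta> y') = y'" using H_props[OF b, of y'] y by auto
  assume "\<not> ?thesis"
  then have "Hfun \<beta> y' \<le> Hfun \<beta> y" by simp
  then have "Gfun \<beta> (Hfun \<beta> y') \<le> Gfun \<beta> (Hfun \<beta> y)"
    using G_inc[OF b h'(1), of "Hfun \<beta> y"] h by (cases "Hfun \<beta> y' = Hfun \<beta> y") auto
  then show False using h h' y by simp
qed

lemma K_mono: assumes b: "\<beta> > 2" and y: "y < y'" "y' \<le> gbeta \<beta>" shows "Kfun \<beta> y' < Kfun \<beta> y"
proof (rule ccontr)
  have h: "lbeta \<beta> \<le> Kfun \<beta> y" "Gfun \<beta> (Kfun \<beta> y) = y" using K_props[OF b, of y] y by auto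
  have h': "lbeta \<beta> \<le> Kfun \<beta> y'" "Gfun \<beta> (Kfun \<beta> y') = y'" using K_props[OF b, of y'] y by auto
  assume "\<not> ?thesis"
  then have "Kfun \<beta> y \<le> Kfun \<beta> y'" by simp
  then have "Gfun \<beta> (Kfun \<beta> y') \<le> Gfun \<beta> (Kfun \<beta> y)"
    using G_dec[OF b h(1), of "Kfun \<beta> y'"] by (cases "Kfun \<beta> y' = Kfun \<beta> y") auto
  then show False using h h' y by simp
qed

lemma K_cont: assumes b: "\<beta> > 2" and ya: "ya \<le> gbeta \<beta>" shows "continuous_on {ya..gbeta \<beta>} (Kfun \<beta>)"
proof -
  have l: "0 < lbeta \<beta>" using l_pos[OF b] by simp
  define S where "S = {lbeta \<beta> .. Kfun \<beta> ya}"
  have c: "continuous_on (Gfun \<beta> ` S) (Kfun \<beta>)"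
  proof (rule continuous_on_inv)
    show "continuous_on S (Gfun \<beta>)" unfolding S_def using b l by (intro G_cont) auto
    show "compact S" unfolding S_def by simp
    show "\<forall>x\<in>S. Kfun \<beta> (Gfun \<beta> x) = x" unfolding S_def using K_eq[OF b] by auto
  qed
  have "{ya..gbeta \<beta>} \<subseteq> Gfun \<beta> ` S"
  proof
    fix y assume y: "y \<in> {ya..gbeta \<beta>}"
    have "Kfun \<beta> y \<le> Kfun \<beta> ya" using K_mono[OF b, of ya y] y by (cases "ya = y") auto
    moreover have "lbeta \<beta> \<le> Kfun \<beta> y" "Gfun \<beta> (Kfun \<beta> y) = y" using K_props[OF b, of y] y by auto
    ultimately show "y \<in> Gfun \<beta> ` S" unfolding S_def by (metis atLeastAtMost_iff imageI)
  qed
  then show ?thesis using c continuous_on_subset by blast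
qed

lemma H_cont: assumes b: "\<beta> > 2" and ya: "ya \<le> gbeta \<beta>" shows "continuous_on {ya..gbeta \<beta>} (Hfun \<beta>)"
proof -
  have h0: "0 < Hfun \<beta> ya" using H_props[OF b ya] by simp
  define S where "S = {Hfun \<beta> ya .. lbeta \<beta>}"
  have c: "continuous_on (Gfun \<beta> ` S) (Hfun \<beta>)"
  proof (rule continuous_on_inv)
    show "continuous_on S (Gfun \<beta>)" unfolding S_def using b h0 by (intro G_cont) auto
    show "compact S" unfolding S_def by simp
    show "\<forall>x\<in>S. Hfun \<beta> (Gfun \<beta> x) = x" unfolding S_def using H_eq[OF b] h0 by auto
  qed
  have "{ya..gbeta \<beta>} \<subseteq> Gfun \<beta> ` S"
  proof
    fix y assume y: "y \<in> {ya..gbeta \<beta>}"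
    have "Hfun \<beta> ya \<le> Hfun \<beta> y" using H_mono[OF b, of ya y] y by (cases "ya = y") auto
    moreover have "Hfun \<beta> y \<le> lbeta \<beta>" "Gfun \<beta> (Hfun \<beta> y) = y" using H_props[OF b, of y] y by auto
    ultimately show "y \<in> Gfun \<beta> ` S" unfolding S_def by (metis atLeastAtMost_iff imageI)
  qed
  then show ?thesis using c continuous_on_subset by blast
qed



definition qf :: "real \<Rightarrow> real" where "qf p = ln p / (p - 1)"
definition wfun :: "real \<Rightarrow> real" where "wfun p = (p + 1) * ln p / (p - 1)"

lemma ln_gt_aux: fixes p p' :: real assumes "1 < p" shows "ln p > 1 - 1/p"
proof -
  have "(\<lambda>p. ln p - 1 + 1/p) 1 < (\<lambda>p. ln p - 1 + 1/p) p"
  proof (rule deriv_strict_inc[where f = "\<lambda>p. ln p - 1 + 1/p" and f' = "\<lambda>p. 1/p - 1/p^2"])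
    fix x assume "1 \<le> x" "x \<le> p"
    then show "((\<lambda>p. ln p - 1 + 1/p) has_real_derivative 1/x - 1/x^2) (at x)"
      by (auto intro!: derivative_eq_intros simp: power2_eq_square field_simps)
  next
    fix x assume x: "1 < x" "x < p"
    then have "x < x^2" by (simp add: power2_eq_square)
    then show "1/x - 1/x^2 > 0" using x by (simp add: field_simps)
  qed (use assms in auto)
  then show ?thesis by simp
qed

lemma v_pos: fixes p p' :: real assumes "1 < p" shows "p - 1/p - 2 * ln p > 0"
proof -
  have "(\<lambda>p. p - 1/p - 2 * ln p) 1 < (\<lambda>p. p - 1/p - 2 * ln p) p"
  proof (rule deriv_strict_inc[where f = "\<lambda>p. p - 1/p - 2 * ln p" and f' = "\<lambda>p. (1 - 1/p)^2"])
    fix x assume "1 \<le> x" "x \<le> p"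
    then show "((\<lambda>p. p - 1/p - 2 * ln p) has_real_derivative (1 - 1/x)^2) (at x)"
      by (auto intro!: derivative_eq_intros simp: power2_eq_square field_simps)
  next
    fix x assume x: "1 < x" "x < p"
    then have "1 - 1/x \<noteq> 0" by simp
    then show "(1 - 1/x)^2 > 0" by simp
  qed (use assms in auto)
  then show ?thesis by simp
qed

lemma z_pos: fixes p :: real assumes "1 < p" shows "ln p > 2 * (p - 1) / (p + 1)"
proof -
  have "(\<lambda>p. ln p - 2 + 4 / (p + 1)) 1 < (\<lambda>p. ln p - 2 + 4 / (p + 1)) p"
  proof (rule deriv_strict_inc[where f = "\<lambda>p. ln p - 2 + 4 / (p + 1)" and f' = "\<lambda>p. 1/p - 4 / ((p + 1) * (p + 1))"])
    fix x :: real assume x: "1 \<le> x" "x \<le> p"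
    then have nz: "x + 1 \<noteq> 0" "x \<noteq> 0" by auto
    show "((\<lambda>p. ln p - 2 + 4 / (p + 1)) has_real_derivative 1/x - 4 / ((x + 1) * (x + 1))) (at x)"
      using x nz by (auto intro!: derivative_eq_intros)
  next
    fix x :: real assume x: "1 < x" "x < p"
    have "(x - 1) * (x - 1) > 0" using x by simp
    then have "4 * x < (x + 1) * (x + 1)" by (simp add: algebra_simps)
    moreover have "(x + 1) * (x + 1) > 0" using x by simp
    ultimately have "4 / ((x + 1) * (x + 1)) < 1 / x" using x by (simp add: field_simps)
    then show "1/x - 4 / ((x + 1) * (x + 1)) > 0" by simp
  qed (use assms in auto)
  moreover have "2 * (p - 1) / (p + 1) = 2 - 4 / (p + 1)" using assms by (simp add: field_simps)
  ultimately show ?thesis by simp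
qed

lemma qf_dec: fixes p p' :: real assumes "1 < p" "p < p'" shows "qf p' < qf p"
proof (rule deriv_strict_dec[where f = qf and f' = "\<lambda>p. ((p - 1)/p - ln p) / (p - 1)^2"])
  fix x assume x: "p \<le> x" "x \<le> p'"
  then have "x > 1" using assms by simp
  then show "(qf has_real_derivative ((x - 1)/x - ln x) / (x - 1)^2) (at x)"
    unfolding qf_def[abs_def] by (auto intro!: derivative_eq_intros simp: power2_eq_square field_simps)
next
  fix x assume x: "p < x" "x < p'"
  then have "x > 1" using assms by simp
  then have "ln x > 1 - 1/x" by (rule ln_gt_aux)
  moreover have "(x - 1)/x = 1 - 1/x" using \<open>x > 1\<close> by (simp add: field_simps)
  ultimately show "((x - 1)/x - ln x) / (x - 1)^2 < 0" using \<open>x > 1\<close> by (intro divide_neg_pos) auto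
qed (use assms in auto)

lemma wf_inc: fixes p p' :: real assumes "1 < p" "p < p'" shows "wfun p < wfun p'"
proof (rule deriv_strict_inc[where f = wfun and f' = "\<lambda>p. (p - 1/p - 2 * ln p) / (p - 1)^2"])
  fix x assume x: "p \<le> x" "x \<le> p'"
  then have "x > 1" using assms by simp
  then have nz: "x - 1 \<noteq> 0" "x \<noteq> 0" by auto
  show "(wfun has_real_derivative (x - 1/x - 2 * ln x) / (x - 1)^2) (at x)"
    unfolding wfun_def[abs_def] using \<open>x > 1\<close> nz
    by (auto intro!: derivative_eq_intros simp: power2_eq_square field_simps)
next
  fix x assume x: "p < x" "x < p'"
  then have "x > 1" using assms by simp
  then show "(x - 1/x - 2 * ln x) / (x - 1)^2 > 0" using v_pos[of x] by (intro divide_pos_pos) auto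
qed (use assms in auto)

lemma wf_gt2: fixes p p' :: real assumes "1 < p" shows "wfun p > 2"
  using z_pos[OF assms] assms unfolding wfun_def by (simp add: field_simps)



lemma HK_rel: assumes b: "\<beta> > 2" and y: "y < gbeta \<beta>"
  shows "Kfun \<beta> y / Hfun \<beta> y > 1 \<and> Hfun \<beta> y = lbeta \<beta> * qf (Kfun \<beta> y / Hfun \<beta> y)
     \<and> Hfun \<beta> y + Kfun \<beta> y = lbeta \<beta> * wfun (Kfun \<beta> y / Hfun \<beta> y)"
proof -
  define H where "H = Hfun \<beta> y"
  define K where "K = Kfun \<beta> y"
  define l where "l = lbeta \<beta>"
  have H: "0 < H" "Gfun \<beta> H = y" using H_props[OF b, of y] y by (auto simp: H_def)
  have K: "Gfun \<beta> K = y" using K_props[OF b, of y] y by (auto simp: K_def)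
  have HK: "H < l" "l < K" using HK_strict[OF b y] by (auto simp: H_def K_def l_def)
  define p where "p = K / H"
  have p1: "p > 1" using H HK by (simp add: p_def field_simps)
  have Kp: "K = H * p" using H by (simp add: p_def)
  have "(1/\<beta>) * ln H - 3/2 * H = (1/\<beta>) * ln K - 3/2 * K" using H K unfolding Gfun_def by simp
  then have "ln K - ln H = (3*\<beta>/2) * (K - H)" using b by (simp add: field_simps)
  moreover have "ln K - ln H = ln p" using H HK by (simp add: p_def ln_div)
  ultimately have lp: "ln p = (3*\<beta>/2) * H * (p - 1)" unfolding Kp by (simp add: algebra_simps)
  have Hq: "H = l * qf p" using lp p1 b unfolding qf_def l_def lbeta_def by (simp add: field_simps)
  have "H + K = l * wfun p" unfolding Kp using Hq p1 unfolding qf_def wfun_def by (simp add: field_simps)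
  then show ?thesis using p1 Hq by (simp add: H_def K_def l_def p_def)
qed

lemma s_mono: assumes b: "\<beta> > 2" and y: "y < y'" "y' \<le> gbeta \<beta>"
  shows "Hfun \<beta> y' + Kfun \<beta> y' < Hfun \<beta> y + Kfun \<beta> y"
proof -
  have l: "0 < lbeta \<beta>" using l_pos[OF b] by simp
  have R: "Kfun \<beta> y / Hfun \<beta> y > 1" "Hfun \<beta> y = lbeta \<beta> * qf (Kfun \<beta> y / Hfun \<beta> y)"
     "Hfun \<beta> y + Kfun \<beta> y = lbeta \<beta> * wfun (Kfun \<beta> y / Hfun \<beta> y)" using HK_rel[OF b, of y] y by auto
  show ?thesis
  proof (cases "y' = gbeta \<beta>")
    case True
    have "wfun (Kfun \<beta> y / Hfun \<beta> y) > 2" using wf_gt2 R by simp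
    then have "lbeta \<beta> * 2 < lbeta \<beta> * wfun (Kfun \<beta> y / Hfun \<beta> y)" using l by simp
    then show ?thesis using True HK_g[OF b] R by simp
  next
    case False
    then have y': "y' < gbeta \<beta>" using y by simp
    have R': "Kfun \<beta> y' / Hfun \<beta> y' > 1" "Hfun \<beta> y' = lbeta \<beta> * qf (Kfun \<beta> y' / Hfun \<beta> y')"
       "Hfun \<beta> y' + Kfun \<beta> y' = lbeta \<beta> * wfun (Kfun \<beta> y' / Hfun \<beta> y')" using HK_rel[OF b y'] by auto
    have "Hfun \<beta> y < Hfun \<beta> y'" using H_mono[OF b y] .
    then have "lbeta \<beta> * qf (Kfun \<beta> y / Hfun \<beta> y) < lbeta \<beta> * qf (Kfun \<beta> y' / Hfun \<beta> y')"
      using R(2) R'(2) by metis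
    then have qq: "qf (Kfun \<beta> y / Hfun \<beta> y) < qf (Kfun \<beta> y' / Hfun \<beta> y')" using l by simp
    have pp: "Kfun \<beta> y' / Hfun \<beta> y' < Kfun \<beta> y / Hfun \<beta> y"
    proof (rule ccontr)
      assume "\<not> ?thesis"
      then have "Kfun \<beta> y / Hfun \<beta> y \<le> Kfun \<beta> y' / Hfun \<beta> y'" by simp
      then have "qf (Kfun \<beta> y' / Hfun \<beta> y') \<le> qf (Kfun \<beta> y / Hfun \<beta> y)"
        using qf_dec[of "Kfun \<beta> y / Hfun \<beta> y" "Kfun \<beta> y' / Hfun \<beta> y'"] R by (cases "Kfun \<beta> y / Hfun \<beta> y = Kfun \<beta> y' / Hfun \<beta> y'") auto
      then show False using qq by simp
    qed
    have "wfun (Kfun \<beta> y' / Hfun \<beta> y') < wfun (Kfun \<beta> y / Hfun \<beta> y)" using wf_inc[OF R'(1) pp] .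
    then show ?thesis using R R' l by simp
  qed
qed

definition Phi :: "real \<Rightarrow> real \<Rightarrow> real \<Rightarrow> real" where
  "Phi \<beta> r y = Kfun \<beta> (y - 3*r/2) + Hfun \<beta> y + Kfun \<beta> y"

lemma Phi_mono: assumes b: "\<beta> > 2" and r: "r \<ge> 0" and y: "y < y'" "y' \<le> gbeta \<beta>"
  shows "Phi \<beta> r y' < Phi \<beta> r y"
  using s_mono[OF b y] K_mono[OF b, of "y - 3*r/2" "y' - 3*r/2"] y r unfolding Phi_def by simp

lemma G_1m2l: assumes b: "\<beta> > 2" shows "Gfun \<beta> (1 - 2 * lbeta \<beta>) = gbeta \<beta> - 3 * r1 \<beta> / 2"
proof -
  define l where "l = lbeta \<beta>"
  have l: "0 < l" "l < 1/3" "3*l = 2/\<beta>" using l_pos[OF b] b by (auto simp: l_def lbeta_def)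
  have "ln (1 - 2*l) = ln l + ln ((1 - 2*l)/l)" using l by (simp add: ln_div)
  moreover have "ln ((1 - 2*l)/l) = ln (3*\<beta>/2 - 2)" using Lf_lbeta[OF b] by (simp add: Lf_def l_def)
  ultimately have "ln (1 - 2*l) = ln l + ln (3*\<beta>/2 - 2)" by simp
  then show ?thesis unfolding gbeta_def Gfun_def r1_def l_def[symmetric] using b l
    by (simp add: field_simps)
qed

lemma Phi_g: assumes b: "\<beta> > 2" and r: "0 < r" "r < r1 \<beta>"
  shows "Phi \<beta> r (gbeta \<beta>) < 1"
proof -
  define l where "l = lbeta \<beta>"
  have l: "0 < l" "l < 1/3" using l_pos[OF b] by (auto simp: l_def)
  define z where "z = Kfun \<beta> (gbeta \<beta> - 3*r/2)"
  have z: "l \<le> z" "Gfun \<beta> z = gbeta \<beta> - 3*r/2" using K_props[OF b, of "gbeta \<beta> - 3*r/2"] r by (auto simp: z_def l_def)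
  have "Gfun \<beta> (1 - 2*l) < Gfun \<beta> z" using G_1m2l[OF b] z r by (simp add: l_def)
  then have "z < 1 - 2*l" using G_dec[OF b, of "1 - 2*l" z] l by (cases "z = 1 - 2*l"; cases "z < 1 - 2*l") (auto simp: l_def)
  then show ?thesis unfolding Phi_def using HK_g[OF b] by (simp add: z_def l_def)
qed

lemma y1_props: assumes b: "\<beta> > 2" and r: "0 < r" "r < r1 \<beta>"
  shows "y1 \<beta> r < gbeta \<beta> \<and> Phi \<beta> r (y1 \<beta> r) = 1"
proof -
  define g where "g = gbeta \<beta>"
  have l: "0 < lbeta \<beta>" "lbeta \<beta> < 1/3" using l_pos[OF b] by auto
  define ya where "ya = Gfun \<beta> 1"
  have ya: "ya \<le> g" using G_le_g[OF b, of 1] by (simp add: ya_def g_def)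
  have Kya: "Kfun \<beta> ya = 1" using K_eq[OF b, of 1] l by (simp add: ya_def)
  have "Phi \<beta> r ya > 1"
  proof -
    have "0 < Hfun \<beta> ya" using H_props[OF b] ya by (simp add: g_def)
    moreover have "0 < Kfun \<beta> (ya - 3*r/2)" using K_props[OF b, of "ya - 3*r/2"] ya r l by (simp add: g_def)
    ultimately show ?thesis unfolding Phi_def Kya by simp
  qed
  moreover have "Phi \<beta> r g < 1" using Phi_g[OF b r] by (simp add: g_def)
  moreover have "continuous_on {ya..g} (Phi \<beta> r)"
  proof -
    have c1: "continuous_on {ya..g} (Kfun \<beta>)" using K_cont[OF b] ya by (simp add: g_def)
    have c2: "continuous_on {ya..g} (Hfun \<beta>)" using H_cont[OF b] ya by (simp add: g_def)
    have c3: "continuous_on {ya - 3*r/2..g} (Kfun \<beta>)" using K_cont[OF b, of "ya - 3*r/2"] ya r by (simp add: g_def)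
    have c4: "continuous_on {ya..g} (\<lambda>y. Kfun \<beta> (y - 3*r/2))"
      by (rule continuous_on_compose2[OF c3]) (use r in \<open>auto intro!: continuous_intros\<close>)
    show ?thesis unfolding Phi_def[abs_def] by (intro continuous_intros c1 c2 c4)
  qed
  ultimately obtain y where y: "ya \<le> y" "y \<le> g" "Phi \<beta> r y = 1"
    using IVT2'[of "Phi \<beta> r" g 1 ya] ya by auto
  have yg: "y < g" using y \<open>Phi \<beta> r g < 1\<close> by (cases "y = g") auto
  have "y1 \<beta> r = y" unfolding y1_def
  proof (rule the_equality)
    show "y \<le> gbeta \<beta> \<and> Kfun \<beta> (y - 3 * r / 2) + Hfun \<beta> y + Kfun \<beta> y = 1" using y by (simp add: g_def Phi_def)
  next
    fix y' assume y': "y' \<le> gbeta \<beta> \<and> Kfun \<beta> (y' - 3 * r / 2) + Hfun \<beta> y' + Kfun \<beta> y' = 1"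
    then have P': "Phi \<beta> r y' = 1" by (simp add: Phi_def)
    show "y' = y"
    proof (rule ccontr)
      assume "y' \<noteq> y"
      then consider "y' < y" | "y < y'" by linarith
      then show False
      proof cases
        case 1 then show False using Phi_mono[OF b _ 1, of r] r y P' by (simp add: g_def)
      next
        case 2 then show False using Phi_mono[OF b _ 2, of r] r y' y P' by simp
      qed
    qed
  qed
  then show ?thesis using y yg by (simp add: g_def)
qed



lemma case1:
  assumes b: "\<beta> > 2" and r: "0 < r" "r < r1 \<beta>"
  shows "{x \<in> lline \<beta> r. \<forall>y \<in> lline \<beta> r. Fbeta \<beta> x r \<le> Fbeta \<beta> y r} = {sigma1 \<beta> r, sigma2 \<beta> r}"
proof -
  define y where "y = y1 \<beta> r"
  have y: "y < gbeta \<beta>" "Phi \<beta> r y = 1" using y1_props[OF b r] by (auto simp: y_def)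
  define H where "H = Hfun \<beta> y"
  define K where "K = Kfun \<beta> y"
  have Hp: "0 < H" "Gfun \<beta> H = y" using H_props[OF b, of y] y by (auto simp: H_def)
  have Kp: "Gfun \<beta> K = y" using K_props[OF b, of y] y by (auto simp: K_def)
  have HK: "H < lbeta \<beta>" "lbeta \<beta> < K" using HK_strict[OF b y(1)] by (auto simp: H_def K_def)
  have l: "0 < lbeta \<beta>" using l_pos[OF b] by simp
  define a where "a = (H + K)/2"
  define ds where "ds = (K - H)/2"
  have ds: "0 < ds" "ds < a" using HK Hp by (auto simp: ds_def a_def)
  have a0: "0 < a" using ds by simp
  have Kr: "0 < Kfun \<beta> (y - 3*r/2)" using K_props[OF b, of "y - 3*r/2"] y r l by simp
  have a1: "2*a \<le> 1" using y(2) Kr unfolding Phi_def a_def H_def K_def by simp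
  have crit: "ell (ds/a) = 3 * \<beta> * ds"
  proof -
    have e1: "1 + ds/a = 2*K/(H+K)" "1 - ds/a = 2*H/(H+K)" using Hp HK
      by (auto simp: ds_def a_def field_simps)
    have "ell (ds/a) = ln (2*K/(H+K)) - ln (2*H/(H+K))" unfolding ell_def e1 ..
    also have "\<dots> = ln K - ln H" using Hp HK l by (simp add: ln_div ln_mult)
    also have "\<dots> = (3*\<beta>/2) * (K - H)"
    proof -
      have "(1/\<beta>) * ln H - 3/2 * H = (1/\<beta>) * ln K - 3/2 * K" using Hp Kp unfolding Gfun_def by simp
      then show ?thesis using b by (simp add: field_simps)
    qed
    finally show ?thesis by (simp add: ds_def)
  qed
  have "2*a = Hfun \<beta> (y1 \<beta> r) + Kfun \<beta> (y1 \<beta> r)" by (simp add: a_def H_def K_def y_def)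
  then have LL: "lline \<beta> r = {x. fst x + snd x = 2*a} \<inter> Xi" using r
    by (simp add: lline_def)
  have S1: "sigma1 \<beta> r = (a + ds, a - ds)" by (simp add: sigma1_def a_def ds_def H_def K_def y_def field_simps)
  have S2: "sigma2 \<beta> r = (a - ds, a + ds)" by (simp add: sigma2_def a_def ds_def H_def K_def y_def field_simps)
  have in1: "(a + ds, a - ds) \<in> lline \<beta> r" unfolding LL using ds a1 by (simp add: Xi_def)
  have in2: "(a - ds, a + ds) \<in> lline \<beta> r" unfolding LL using ds a1 by (simp add: Xi_def)
  have F1: "Fbeta \<beta> (a + ds, a - ds) r = Cst \<beta> a r + psi \<beta> a ds" by (rule F_line)
  have F2: "Fbeta \<beta> (a - ds, a + ds) r = Cst \<beta> a r + psi \<beta> a ds"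
    using F_line[of \<beta> a "- ds" r] psi_sym[of \<beta> a ds] by simp
  have b0: "\<beta> > 0" using b by simp
  have key: "\<And>x. x \<in> lline \<beta> r \<Longrightarrow> x \<noteq> (a + ds, a - ds) \<Longrightarrow> x \<noteq> (a - ds, a + ds) \<Longrightarrow>
      Cst \<beta> a r + psi \<beta> a ds < Fbeta \<beta> x r"
  proof -
    fix x assume x: "x \<in> lline \<beta> r" "x \<noteq> (a + ds, a - ds)" "x \<noteq> (a - ds, a + ds)"
    define d where "d = (fst x - snd x)/2"
    have xl: "fst x + snd x = 2*a" "x \<in> Xi" using x LL by auto
    have da: "\<bar>d\<bar> \<le> a" using line_Xi[OF xl] by (simp add: d_def)
    have Fx: "Fbeta \<beta> x r = Cst \<beta> a r + psi \<beta> a d" using line_F[OF xl(1)] by (simp add: d_def)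
    have xe: "x = (a + d, a - d)" using line_param[OF xl(1)] by (simp add: d_def)
    have "\<bar>d\<bar> \<noteq> ds" using x xe by (cases "d \<ge> 0") auto
    then have "psi \<beta> a ds < psi \<beta> a \<bar>d\<bar>"
      using psi_case1(1)[OF b0 a0 ds crit, of "\<bar>d\<bar>"] psi_case1(2)[OF b0 a0 ds crit, of "\<bar>d\<bar>"] da
      by (cases "\<bar>d\<bar> < ds") auto
    moreover have "psi \<beta> a \<bar>d\<bar> = psi \<beta> a d" using psi_sym[of \<beta> a d] by (cases "d \<ge> 0") auto
    ultimately show "Cst \<beta> a r + psi \<beta> a ds < Fbeta \<beta> x r" using Fx by simp
  qed
  show ?thesis
  proof (rule set_eqI, rule iffI)
    fix x assume x: "x \<in> {x \<in> lline \<beta> r. \<forall>y \<in> lline \<beta> r. Fbeta \<beta> x r \<le> Fbeta \<beta> y r}"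
    then have "Fbeta \<beta> x r \<le> Fbeta \<beta> (a + ds, a - ds) r" "x \<in> lline \<beta> r" using in1 by auto
    then show "x \<in> {sigma1 \<beta> r, sigma2 \<beta> r}" using key[of x] S1 S2 F1 by force
  next
    fix x assume "x \<in> {sigma1 \<beta> r, sigma2 \<beta> r}"
    then have xs: "x = (a + ds, a - ds) \<or> x = (a - ds, a + ds)" using S1 S2 by auto
    then have Fx: "Fbeta \<beta> x r = Cst \<beta> a r + psi \<beta> a ds" using F1 F2 by auto
    have "\<forall>y \<in> lline \<beta> r. Fbeta \<beta> x r \<le> Fbeta \<beta> y r"
    proof
      fix z assume z: "z \<in> lline \<beta> r"
      show "Fbeta \<beta> x r \<le> Fbeta \<beta> z r"
      proof (cases "z = (a + ds, a - ds) \<or> z = (a - ds, a + ds)")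
        case True then show ?thesis using Fx F1 F2 by auto
      next
        case False then show ?thesis using key[OF z] Fx by auto
      qed
    qed
    then show "x \<in> {x \<in> lline \<beta> r. \<forall>y \<in> lline \<beta> r. Fbeta \<beta> x r \<le> Fbeta \<beta> y r}"
      using xs in1 in2 by auto
  qed
qed

theorem lemma5p11:
  fixes \<beta> r :: real
  assumes "\<beta> > 2"
  shows "(0 < r \<and> r < r1 \<beta> \<longrightarrow>
            {x \<in> lline \<beta> r. \<forall>y \<in> lline \<beta> r. Fbeta \<beta> x r \<le> Fbeta \<beta> y r}
              = {sigma1 \<beta> r, sigma2 \<beta> r})
       \<and> (r1 \<beta> < r \<and> r < r2 \<beta> \<longrightarrow>
            {x \<in> lline \<beta> r. \<forall>y \<in> lline \<beta> r. Fbeta \<beta> x r \<le> Fbeta \<beta> y r}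
              = {pbeta \<beta> r})"
  using case1[OF assms] case2[OF assms] by blast


end
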